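(* Let $\mathfrak g$ be a finite-dimensional complex Lie superalgebra and let $I^s_+(\mathfrak g)$ be the subspace of $I^s(\mathfrak g)$ of invariant supersymmetric forms with no constant term. Then $s(P)=0$ for all $P\in I^s_+(\mathfrak g)$.
   Context: Elements of $\mathfrak g=\mathfrak g_{\bar0}\oplus\mathfrak g_{\bar1}$ are homogeneous, degrees denoted by lower-case letters. For $\mathcal X=(X_1,\dots,X_k)$, $\sigma\in\mathfrak S_k$, $\epsilon(\sigma,\mathcal X)=(-1)^K$, $K$ the number of pairs $i<j$ with $\sigma(i)>\sigma(j)$ and $X_{\sigma(i)},X_{\sigma(j)}$ odd. A $k$-form $F$ has degree $f$ if $F(X_1,\dots,X_k)\neq0$ only when $x_1+\dots+x_k+f=0$. $\mathcal P(\mathfrak g)$ (resp. $\mathcal A(\mathfrak g)$) is the space of forms of all orders (constants = $0$-forms) with $\epsilon(\sigma,\mathcal X)F(X_{\sigma(1)},\dots)=F(X_1,\dots)$ (resp. $\epsilon(\sigma)\epsilon(\sigma,\mathcal X)F(X_{\sigma(1)},\dots)=F(X_1,\dots)$) for all $\sigma$; products: with $(F\boxtimes G)(X_1,\dots,X_{a+b})=(-1)^{g(x_1+\dots+x_a)}F(X_1,\dots,X_a)G(X_{a+1},\dots)$, $F\cdot G=\frac1{a!b!}\sum_\sigma\epsilon(\sigma,\mathcal X)(F\boxtimes G)(X_{\sigma(1)},\dots)$ and $F\wedge G=\frac1{a!b!}\sum_\sigma\epsilon(\sigma)\epsilon(\sigma,\mathcal X)(F\boxtimes G)(X_{\sigma(1)},\dots)$.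 For $F$ of degree $f$, $L_XF(X_1,\dots,X_k)=-(-1)^{xf}\sum_j(-1)^{x(x_1+\dots+x_{j-1})}F(X_1,\dots,[X,X_j],\dots,X_k)$, and $I^s(\mathfrak g)=\{P\in\mathcal P(\mathfrak g):L_XP=0\ \forall X\in\mathfrak g\}$. The differential $d$ on $\mathcal A(\mathfrak g)$: $dF(X_1,\dots,X_{k+1})=\sum_{i<j}(-1)^{i+j}(-1)^{x_i(x_1+\dots+x_{i-1})}(-1)^{x_j(x_1+\dots+\widehat{x_i}+\dots+x_{j-1})}F([X_i,X_j],X_1,\dots,\widehat{X_i},\dots,\widehat{X_j},\dots,X_{k+1})$, so $d\phi(X_1,X_2)=-\phi([X_1,X_2])$ for $\phi\in\mathfrak g^*$. $s:\mathcal P(\mathfrak g)\to\mathcal A(\mathfrak g)$ is the algebra homomorphism (for $\cdot$ and $\wedge$) with $s(\phi)=d\phi$ for all $\phi\in\mathfrak g^*$. *)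

theory Defs
  imports Complex_Main "HOL-Combinatorics.Permutations"
begin

text \<open>Parities are booleans (True = odd).  The Lie superalgebra is a complex vector space
  (scalar multiplication scale) with a Z/2-grading g = G0 + G1 and a bracket br.\<close>

definition psgn :: "bool \<Rightarrow> complex" where
  "psgn b = (if b then -1 else 1)"

definition psum :: "bool list \<Rightarrow> bool" where
  "psum bs = foldr (\<lambda>a b. a \<noteq> b) bs False"

definition hcomp :: "'g set \<Rightarrow> 'g set \<Rightarrow> bool \<Rightarrow> 'g set" where
  "hcomp G0 G1 b = (if b then G1 else G0)"

definition homlist :: "'g set \<Rightarrow> 'g set \<Rightarrow> bool list \<Rightarrow> 'g list \<Rightarrow> bool" where
  "homlist G0 G1 bs xs \<longleftrightarrow> length bs = length xs \<and>
     (\<forall>i<length xs. xs ! i \<in> hcomp G0 G1 (bs ! i))"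

definition lie_superalgebra ::
  "(complex \<Rightarrow> 'g::ab_group_add \<Rightarrow> 'g) \<Rightarrow> 'g set \<Rightarrow> 'g set \<Rightarrow> ('g \<Rightarrow> 'g \<Rightarrow> 'g) \<Rightarrow> bool" where
  "lie_superalgebra scale G0 G1 br \<longleftrightarrow>
     vector_space scale \<and>
     (\<exists>B. finite B \<and> module.span scale B = UNIV) \<and>
     module.subspace scale G0 \<and> module.subspace scale G1 \<and>
     G0 \<inter> G1 = {0} \<and> (\<forall>x. \<exists>a\<in>G0. \<exists>b\<in>G1. x = a + b) \<and>
     (\<forall>c x y z. br (scale c x + y) z = scale c (br x z) + br y z) \<and>
     (\<forall>c x y z. br z (scale c x + y) = scale c (br z x) + br z y) \<and>
     (\<forall>p q x y. x \<in> hcomp G0 G1 p \<longrightarrow> y \<in> hcomp G0 G1 q \<longrightarrow>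
        br x y \<in> hcomp G0 G1 (p \<noteq> q)) \<and>
     (\<forall>p q x y. x \<in> hcomp G0 G1 p \<longrightarrow> y \<in> hcomp G0 G1 q \<longrightarrow>
        br x y = - scale (psgn (p \<and> q)) (br y x)) \<and>
     (\<forall>p q x y z. x \<in> hcomp G0 G1 p \<longrightarrow> y \<in> hcomp G0 G1 q \<longrightarrow>
        br x (br y z) = br (br x y) z + scale (psgn (p \<and> q)) (br y (br x z)))"

definition proj :: "'g::ab_group_add set \<Rightarrow> 'g set \<Rightarrow> bool \<Rightarrow> 'g \<Rightarrow> 'g" where
  "proj G0 G1 b x = (THE y. y \<in> hcomp G0 G1 b \<and> (\<exists>z \<in> hcomp G0 G1 (\<not> b). x = y + z))"

text \<open>Multilinear extension of a formula given on homogeneous arguments (with their parities).\<close>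
definition hext :: "'g::ab_group_add set \<Rightarrow> 'g set \<Rightarrow> (bool list \<Rightarrow> 'g list \<Rightarrow> complex)
    \<Rightarrow> 'g list \<Rightarrow> complex" where
  "hext G0 G1 \<Phi> xs = (\<Sum>bs \<in> {bs. length bs = length xs}. \<Phi> bs (map2 (proj G0 G1) bs xs))"

definition eps :: "(nat \<Rightarrow> nat) \<Rightarrow> bool list \<Rightarrow> complex" where
  "eps \<sigma> bs = (-1) ^ card {(i, j). i < j \<and> j < length bs \<and> \<sigma> j < \<sigma> i \<and> bs ! (\<sigma> i) \<and> bs ! (\<sigma> j)}"

text \<open>A form of all orders is a function on lists; its k-th component is its restriction
  to lists of length k (the empty list gives the constant term).\<close>
definition multilin :: "(complex \<Rightarrow> 'g \<Rightarrow> 'g) \<Rightarrow> ('g::ab_group_add list \<Rightarrow> complex) \<Rightarrow> bool" where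
  "multilin scale F \<longleftrightarrow> (\<forall>xs ys c x y.
     F (xs @ (scale c x + y) # ys) = c * F (xs @ x # ys) + F (xs @ y # ys))"

definition fin_order :: "('g list \<Rightarrow> complex) \<Rightarrow> bool" where
  "fin_order F \<longleftrightarrow> (\<exists>N. \<forall>xs. N < length xs \<longrightarrow> F xs = 0)"

definition supersym :: "'g set \<Rightarrow> 'g set \<Rightarrow> ('g list \<Rightarrow> complex) \<Rightarrow> bool" where
  "supersym G0 G1 F \<longleftrightarrow> (\<forall>bs xs \<sigma>. homlist G0 G1 bs xs \<longrightarrow> \<sigma> permutes {..<length xs} \<longrightarrow>
     eps \<sigma> bs * F (permute_list \<sigma> xs) = F xs)"

definition superalt :: "'g set \<Rightarrow> 'g set \<Rightarrow> ('g list \<Rightarrow> complex) \<Rightarrow> bool" where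
  "superalt G0 G1 F \<longleftrightarrow> (\<forall>bs xs \<sigma>. homlist G0 G1 bs xs \<longrightarrow> \<sigma> permutes {..<length xs} \<longrightarrow>
     of_int (sign \<sigma>) * eps \<sigma> bs * F (permute_list \<sigma> xs) = F xs)"

definition Pforms :: "(complex \<Rightarrow> 'g \<Rightarrow> 'g) \<Rightarrow> 'g::ab_group_add set \<Rightarrow> 'g set \<Rightarrow> ('g list \<Rightarrow> complex) set" where
  "Pforms scale G0 G1 = {F. multilin scale F \<and> fin_order F \<and> supersym G0 G1 F}"

definition Aforms :: "(complex \<Rightarrow> 'g \<Rightarrow> 'g) \<Rightarrow> 'g::ab_group_add set \<Rightarrow> 'g set \<Rightarrow> ('g list \<Rightarrow> complex) set" where
  "Aforms scale G0 G1 = {F. multilin scale F \<and> fin_order F \<and> superalt G0 G1 F}"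

text \<open>(F boxtimes G) on homogeneous arguments, with F contributing its a-form component;
  the degree of the relevant (homogeneous) part of G equals the parity sum of its arguments.\<close>
definition boxh :: "nat \<Rightarrow> ('g list \<Rightarrow> complex) \<Rightarrow> ('g list \<Rightarrow> complex) \<Rightarrow> bool list \<Rightarrow> 'g list \<Rightarrow> complex" where
  "boxh a F G bs xs = psgn (psum (drop a bs) \<and> psum (take a bs)) * F (take a xs) * G (drop a xs)"

definition sprod :: "'g::ab_group_add set \<Rightarrow> 'g set \<Rightarrow> ('g list \<Rightarrow> complex) \<Rightarrow> ('g list \<Rightarrow> complex) \<Rightarrow> 'g list \<Rightarrow> complex" where
  "sprod G0 G1 F G = hext G0 G1 (\<lambda>bs xs. \<Sum>a\<le>length xs.
      (1 / of_nat (fact a * fact (length xs - a))) *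
      (\<Sum>\<sigma> \<in> {\<sigma>. \<sigma> permutes {..<length xs}}.
         eps \<sigma> bs * boxh a F G (permute_list \<sigma> bs) (permute_list \<sigma> xs)))"

definition wprod :: "'g::ab_group_add set \<Rightarrow> 'g set \<Rightarrow> ('g list \<Rightarrow> complex) \<Rightarrow> ('g list \<Rightarrow> complex) \<Rightarrow> 'g list \<Rightarrow> complex" where
  "wprod G0 G1 F G = hext G0 G1 (\<lambda>bs xs. \<Sum>a\<le>length xs.
      (1 / of_nat (fact a * fact (length xs - a))) *
      (\<Sum>\<sigma> \<in> {\<sigma>. \<sigma> permutes {..<length xs}}.
         of_int (sign \<sigma>) * eps \<sigma> bs * boxh a F G (permute_list \<sigma> bs) (permute_list \<sigma> xs)))"

text \<open>Lie derivative L_X F for X homogeneous of parity p: on homogeneous arguments with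
  parities bs, only the degree-f part of F with f = p + sum bs contributes.\<close>
definition lieD :: "'g::ab_group_add set \<Rightarrow> 'g set \<Rightarrow> ('g \<Rightarrow> 'g \<Rightarrow> 'g) \<Rightarrow> bool \<Rightarrow> 'g
    \<Rightarrow> ('g list \<Rightarrow> complex) \<Rightarrow> 'g list \<Rightarrow> complex" where
  "lieD G0 G1 br p X F = hext G0 G1 (\<lambda>bs xs.
      - psgn (p \<and> (p \<noteq> psum bs)) *
      (\<Sum>j<length xs. psgn (p \<and> psum (take j bs)) * F (xs[j := br X (xs ! j)])))"

definition Is :: "(complex \<Rightarrow> 'g \<Rightarrow> 'g) \<Rightarrow> 'g::ab_group_add set \<Rightarrow> 'g set \<Rightarrow> ('g \<Rightarrow> 'g \<Rightarrow> 'g)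
    \<Rightarrow> ('g list \<Rightarrow> complex) set" where
  "Is scale G0 G1 br = {P \<in> Pforms scale G0 G1.
      \<forall>p X. X \<in> hcomp G0 G1 p \<longrightarrow> lieD G0 G1 br p X P = (\<lambda>_. 0)}"

definition Isplus :: "(complex \<Rightarrow> 'g \<Rightarrow> 'g) \<Rightarrow> 'g::ab_group_add set \<Rightarrow> 'g set \<Rightarrow> ('g \<Rightarrow> 'g \<Rightarrow> 'g)
    \<Rightarrow> ('g list \<Rightarrow> complex) set" where
  "Isplus scale G0 G1 br = {P \<in> Is scale G0 G1 br. P [] = 0}"

text \<open>Differential d (0-based indices; (-1)^(i+j) has the same parity as in 1-based form).\<close>
definition dform :: "'g::ab_group_add set \<Rightarrow> 'g set \<Rightarrow> ('g \<Rightarrow> 'g \<Rightarrow> 'g)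
    \<Rightarrow> ('g list \<Rightarrow> complex) \<Rightarrow> 'g list \<Rightarrow> complex" where
  "dform G0 G1 br F = hext G0 G1 (\<lambda>bs xs.
      \<Sum>(i, j) \<in> {(i, j). i < j \<and> j < length xs}.
        (-1) ^ (i + j) * psgn (bs ! i \<and> psum (take i bs)) *
        psgn (bs ! j \<and> (psum (take j bs) \<noteq> bs ! i)) *
        F (br (xs ! i) (xs ! j) # [xs ! l. l \<leftarrow> [0..<length xs], l \<noteq> i, l \<noteq> j]))"

definition gdual :: "(complex \<Rightarrow> 'g \<Rightarrow> 'g) \<Rightarrow> ('g::ab_group_add list \<Rightarrow> complex) set" where
  "gdual scale = {\<phi>. multilin scale \<phi> \<and> (\<forall>xs. length xs \<noteq> 1 \<longrightarrow> \<phi> xs = 0)}"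

definition constf :: "complex \<Rightarrow> 'g list \<Rightarrow> complex" where
  "constf c = (\<lambda>xs. if xs = [] then c else 0)"

definition is_s_map :: "(complex \<Rightarrow> 'g \<Rightarrow> 'g) \<Rightarrow> 'g::ab_group_add set \<Rightarrow> 'g set \<Rightarrow> ('g \<Rightarrow> 'g \<Rightarrow> 'g)
    \<Rightarrow> (('g list \<Rightarrow> complex) \<Rightarrow> ('g list \<Rightarrow> complex)) \<Rightarrow> bool" where
  "is_s_map scale G0 G1 br s \<longleftrightarrow>
     (\<forall>F \<in> Pforms scale G0 G1. s F \<in> Aforms scale G0 G1) \<and>
     (\<forall>F \<in> Pforms scale G0 G1. \<forall>G \<in> Pforms scale G0 G1. \<forall>c.
        s (\<lambda>xs. c * F xs + G xs) = (\<lambda>xs. c * s F xs + s G xs)) \<and>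
     (\<forall>F \<in> Pforms scale G0 G1. \<forall>G \<in> Pforms scale G0 G1.
        s (sprod G0 G1 F G) = wprod G0 G1 (s F) (s G)) \<and>
     (\<forall>c. s (constf c) = constf c) \<and>
     (\<forall>\<phi> \<in> gdual scale. s \<phi> = dform G0 G1 br \<phi>)"

end

theory Submission
  imports Defs
begin

lemma psgn_simps [simp]: "psgn True = -1" "psgn False = 1"
  by (simp_all add: psgn_def)

lemma psgn_mult: "psgn a * psgn b = psgn (a \<noteq> b)"
  by (simp add: psgn_def)

lemma psgn_sq [simp]: "psgn a * psgn a = 1"
  by (simp add: psgn_def)

lemma psgn_sq' [simp]: "psgn a * (psgn a * z) = z"
  by (simp add: psgn_def)

lemma psum_Nil [simp]: "psum [] = False"
  by (simp add: psum_def)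

lemma psum_Cons [simp]: "psum (b # bs) = (b \<noteq> psum bs)"
  by (simp add: psum_def)

lemma psum_append [simp]: "psum (xs @ ys) = (psum xs \<noteq> psum ys)"
  by (induction xs) auto

lemma psum_count: "psum bs = odd (count (mset bs) True)"
  by (induction bs) auto

lemma psum_permute [simp]:
  assumes "\<sigma> permutes {..<length bs}"
  shows "psum (permute_list \<sigma> bs) = psum bs"
  using assms by (simp add: psum_count mset_permute_list)

locale LSA =
  fixes scale :: "complex \<Rightarrow> 'g::ab_group_add \<Rightarrow> 'g"
    and G0 G1 :: "'g set"
    and br :: "'g \<Rightarrow> 'g \<Rightarrow> 'g"
  assumes LS: "lie_superalgebra scale G0 G1 br"
begin

abbreviation hc where "hc \<equiv> hcomp G0 G1"
abbreviation pj where "pj \<equiv> proj G0 G1"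

lemma VS: "vector_space scale"
  using LS by (simp add: lie_superalgebra_def)

sublocale vector_space scale by (rule VS)

lemma LSc: "vector_space scale \<and>
     (\<exists>B. finite B \<and> module.span scale B = UNIV) \<and>
     module.subspace scale G0 \<and> module.subspace scale G1 \<and>
     G0 \<inter> G1 = {0} \<and> (\<forall>x. \<exists>a\<in>G0. \<exists>b\<in>G1. x = a + b) \<and>
     (\<forall>c x y z. br (scale c x + y) z = scale c (br x z) + br y z) \<and>
     (\<forall>c x y z. br z (scale c x + y) = scale c (br z x) + br z y) \<and>
     (\<forall>p q x y. x \<in> hcomp G0 G1 p \<longrightarrow> y \<in> hcomp G0 G1 q \<longrightarrow>
        br x y \<in> hcomp G0 G1 (p \<noteq> q)) \<and>
     (\<forall>p q x y. x \<in> hcomp G0 G1 p \<longrightarrow> y \<in> hcomp G0 G1 q \<longrightarrow>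
        br x y = - scale (psgn (p \<and> q)) (br y x)) \<and>
     (\<forall>p q x y z. x \<in> hcomp G0 G1 p \<longrightarrow> y \<in> hcomp G0 G1 q \<longrightarrow>
        br x (br y z) = br (br x y) z + scale (psgn (p \<and> q)) (br y (br x z)))"
  by (rule LS[unfolded lie_superalgebra_def])

lemma sub0: "subspace G0" using LSc by (elim conjE) assumption
lemma sub1: "subspace G1" using LSc by (elim conjE) assumption
lemma inter01: "G0 \<inter> G1 = {0}" using LSc by (elim conjE) assumption
lemma dec01: "\<exists>a\<in>G0. \<exists>b\<in>G1. x = a + b" using LSc by (elim conjE) (erule allE)
lemma brl1: "br (scale c x + y) z = scale c (br x z) + br y z"
  using LSc by (elim conjE) (drule spec)+
lemma brl2: "br z (scale c x + y) = scale c (br z x) + br z y"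
  using LSc by (elim conjE) (drule spec)+
lemma brhom: "x \<in> hc p \<Longrightarrow> y \<in> hc q \<Longrightarrow> br x y \<in> hc (p \<noteq> q)"
proof -
  assume a: "x \<in> hc p" "y \<in> hc q"
  from LSc have "\<forall>p q x y. x \<in> hc p \<longrightarrow> y \<in> hc q \<longrightarrow> br x y \<in> hc (p \<noteq> q)" by (elim conjE) assumption
  then show ?thesis using a by blast
qed
lemma branti: "x \<in> hc p \<Longrightarrow> y \<in> hc q \<Longrightarrow> br x y = - scale (psgn (p \<and> q)) (br y x)"
proof -
  assume a: "x \<in> hc p" "y \<in> hc q"
  from LSc have "\<forall>p q x y. x \<in> hc p \<longrightarrow> y \<in> hc q \<longrightarrow> br x y = - scale (psgn (p \<and> q)) (br y x)" by (elim conjE) assumption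
  then show ?thesis using a by blast
qed
lemma brjac: "x \<in> hc p \<Longrightarrow> y \<in> hc q \<Longrightarrow>
        br x (br y z) = br (br x y) z + scale (psgn (p \<and> q)) (br y (br x z))"
proof -
  assume a: "x \<in> hc p" "y \<in> hc q"
  from LSc have "\<forall>p q x y z. x \<in> hc p \<longrightarrow> y \<in> hc q \<longrightarrow>
        br x (br y z) = br (br x y) z + scale (psgn (p \<and> q)) (br y (br x z))" by (elim conjE) assumption
  then show ?thesis using a by blast
qed

lemma finspan: "\<exists>B. finite B \<and> span B = UNIV"
  using LSc by (elim conjE) assumption

lemma hc_sub: "subspace (hc b)"
  using sub0 sub1 by (simp add: hcomp_def)

lemma hc_0 [simp]: "0 \<in> hc b"
  using hc_sub subspace_0 by blast

lemma hc_add: "x \<in> hc b \<Longrightarrow> y \<in> hc b \<Longrightarrow> x + y \<in> hc b"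
  using hc_sub subspace_add by blast

lemma hc_scale: "x \<in> hc b \<Longrightarrow> scale c x \<in> hc b"
  using hc_sub subspace_scale by blast

lemma hc_neg: "x \<in> hc b \<Longrightarrow> - x \<in> hc b"
  using hc_sub subspace_neg by blast

lemma hc_sum: "(\<And>i. i \<in> I \<Longrightarrow> f i \<in> hc b) \<Longrightarrow> sum f I \<in> hc b"
  using hc_sub subspace_sum by blast

lemma hc_both: "x \<in> hc b \<Longrightarrow> x \<in> hc (\<not> b) \<Longrightarrow> x = 0"
  using inter01 by (cases b) (auto simp: hcomp_def)

lemma hc_dec: "\<exists>y\<in>hc b. \<exists>z\<in>hc (\<not> b). x = y + z"
proof -
  obtain a c where ac: "a \<in> G0" "c \<in> G1" "x = a + c" using dec01[of x] by blast
  show ?thesis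
  proof (cases b)
    case True
    have "c \<in> hc b" "a \<in> hc (\<not> b)" using True ac by (auto simp: hcomp_def)
    then show ?thesis using ac(3) by (metis add.commute)
  next
    case False
    then show ?thesis using ac by (auto simp: hcomp_def)
  qed
qed

lemma hc_uniq:
  assumes "y \<in> hc b" "z \<in> hc (\<not> b)" "y' \<in> hc b" "z' \<in> hc (\<not> b)" "y + z = y' + z'"
  shows "y = y'"
proof -
  have "y - y' = z' - z" using assms(5) by (simp add: algebra_simps)
  moreover have "y - y' \<in> hc b" using assms hc_sub subspace_diff by blast
  moreover have "z' - z \<in> hc (\<not> b)" using assms hc_sub subspace_diff by blast
  ultimately show ?thesis using hc_both by fastforce
qed

lemma proj_eq:
  assumes "y \<in> hc b" "z \<in> hc (\<not> b)" "x = y + z"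
  shows "pj b x = y"
  unfolding proj_def
proof (rule the_equality)
  show "y \<in> hc b \<and> (\<exists>z\<in>hc (\<not> b). x = y + z)" using assms by blast
  fix y' assume "y' \<in> hc b \<and> (\<exists>z\<in>hc (\<not> b). x = y' + z)"
  then show "y' = y" using assms hc_uniq by metis
qed

lemma proj_in [simp]: "pj b x \<in> hc b"
proof -
  obtain y z where "y \<in> hc b" "z \<in> hc (\<not> b)" "x = y + z" using hc_dec by blast
  then show ?thesis using proj_eq by simp
qed

lemma proj_split: "pj b x + pj (\<not> b) x = x"
proof -
  obtain y z where yz: "y \<in> hc b" "z \<in> hc (\<not> b)" "x = y + z" using hc_dec by blast
  have "pj b x = y" using proj_eq yz by simp
  moreover have "pj (\<not> b) x = z" using yz by (intro proj_eq) (auto simp: add.commute)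
  ultimately show ?thesis using yz by simp
qed

lemma proj_split': "pj False x + pj True x = x"
  using proj_split[of False x] by simp

lemma proj_hom: "x \<in> hc b \<Longrightarrow> pj b x = x"
  by (rule proj_eq[of x b 0]) auto

lemma proj_hom0: "x \<in> hc b \<Longrightarrow> pj (\<not> b) x = 0"
  by (rule proj_eq[of 0 "\<not> b" x]) auto

lemma proj_hom0': "x \<in> hc b \<Longrightarrow> c \<noteq> b \<Longrightarrow> pj c x = 0"
  using proj_hom0[of x b] by (cases c; cases b) auto

lemma proj_lin: "pj b (scale c x + y) = scale c (pj b x) + pj b y"
proof (rule proj_eq)
  show "scale c (pj b x) + pj b y \<in> hc b" by (simp add: hc_add hc_scale)
  show "scale c (pj (\<not> b) x) + pj (\<not> b) y \<in> hc (\<not> b)" by (simp add: hc_add hc_scale)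
  have "scale c x + y = scale c (pj b x + pj (\<not> b) x) + (pj b y + pj (\<not> b) y)"
    by (simp add: proj_split)
  then show "scale c x + y = scale c (pj b x) + pj b y + (scale c (pj (\<not> b) x) + pj (\<not> b) y)"
    by (simp add: algebra_simps)
qed

lemma proj_zero [simp]: "pj b 0 = 0"
  by (rule proj_hom) simp

lemma br_add1: "br (x + y) z = br x z + br y z"
  using brl1[where c=1 and x=x and y=y and z=z] by simp

lemma br_add2: "br z (x + y) = br z x + br z y"
  using brl2[where c=1 and x=x and y=y and z=z] by simp

lemma br_scale1: "br (scale c x) z = scale c (br x z)"
proof -
  have "br (scale c x + 0) z = scale c (br x z) + br 0 z" by (rule brl1)
  moreover have "br 0 z = 0"
    using br_add1[of 0 0 z] by simp
  ultimately show ?thesis by simp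
qed

lemma br_scale2: "br z (scale c x) = scale c (br z x)"
proof -
  have "br z (scale c x + 0) = scale c (br z x) + br z 0" by (rule brl2)
  moreover have "br z 0 = 0"
    using br_add2[of z 0 0] by simp
  ultimately show ?thesis by simp
qed

lemma br_0 [simp]: "br 0 z = 0" "br z 0 = 0"
  using br_add1[of 0 0 z] br_add2[of z 0 0] by simp_all

lemma scale_psgn: "scale (psgn b) v = (if b then - v else v)"
  by (cases b) (simp_all add: scale_minus_left)

lemma ml_upd:
  assumes "multilin scale F" "j < length zs"
  shows "F (zs[j := scale c x + y]) = c * F (zs[j := x]) + F (zs[j := y])"
proof -
  have e: "zs[j := v] = take j zs @ v # drop (Suc j) zs" for v
    using assms(2) by (simp add: upd_conv_take_nth_drop)
  show ?thesis unfolding e using assms(1) by (simp add: multilin_def)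
qed

lemma ml_zero:
  assumes "multilin scale F" "j < length zs" "zs ! j = 0"
  shows "F zs = 0"
proof -
  have "F (zs[j := scale 1 0 + 0]) = 1 * F (zs[j := 0]) + F (zs[j := 0])"
    by (rule ml_upd[OF assms(1,2)])
  moreover have "zs[j := 0] = zs" using assms(3) by (metis list_update_id)
  ultimately show ?thesis by simp
qed

lemma ml_add:
  assumes "multilin scale F" "j < length zs"
  shows "F (zs[j := x + y]) = F (zs[j := x]) + F (zs[j := y])"
  using ml_upd[OF assms, of 1 x y] by simp

lemma ml_scale:
  assumes "multilin scale F" "j < length zs"
  shows "F (zs[j := scale c x]) = c * F (zs[j := x])"
  using ml_upd[OF assms, of c x 0] ml_zero[OF assms(1), of j "zs[j:=0]"] assms(2) by simp

lemma ml_sum: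
  assumes "multilin scale F" "j < length zs"
  shows "F (zs[j := (\<Sum>i\<in>I. scale (c i) (v i))]) = (\<Sum>i\<in>I. c i * F (zs[j := v i]))"
proof (induction I rule: infinite_finite_induct)
  case (infinite A) then show ?case using ml_zero[OF assms(1), of j "zs[j:=0]"] assms(2) by simp
next
  case empty then show ?case using ml_zero[OF assms(1), of j "zs[j:=0]"] assms(2) by simp
next
  case (insert a A)
  then show ?case using ml_upd[OF assms] by simp
qed

lemma ml_Cons_upd: "(x # zs)[0 := v] = v # zs" by simp

lemma finite_bool_lists [simp]: "finite {bs :: bool list. length bs = n}"
proof -
  have "{bs :: bool list. length bs = n} \<subseteq> {bs. set bs \<subseteq> UNIV \<and> length bs = n}" by auto
  then show ?thesis using finite_lists_length_eq[of "UNIV :: bool set" n] by simp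
qed

lemma sum_bool_lists_Suc:
  "(\<Sum>bs\<in>{bs :: bool list. length bs = Suc n}. f bs)
     = (\<Sum>bs\<in>{bs. length bs = n}. f (False # bs) + f (True # bs))"
proof -
  let ?A = "{bs :: bool list. length bs = n}"
  have eq: "{bs :: bool list. length bs = Suc n} = (Cons False) ` ?A \<union> (Cons True) ` ?A"
  proof
    show "{bs :: bool list. length bs = Suc n} \<subseteq> (Cons False) ` ?A \<union> (Cons True) ` ?A"
    proof
      fix bs :: "bool list" assume "bs \<in> {bs. length bs = Suc n}"
      then obtain b cs where "bs = b # cs" "length cs = n" by (auto simp: length_Suc_conv)
      then show "bs \<in> (Cons False) ` ?A \<union> (Cons True) ` ?A" by (cases b) auto
    qed
  qed auto
  have "(\<Sum>bs\<in>{bs :: bool list. length bs = Suc n}. f bs)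
      = (\<Sum>bs\<in>(Cons False) ` ?A. f bs) + (\<Sum>bs\<in>(Cons True) ` ?A. f bs)"
    unfolding eq by (rule sum.union_disjoint) auto
  also have "\<dots> = (\<Sum>bs\<in>?A. f (False # bs)) + (\<Sum>bs\<in>?A. f (True # bs))"
    by (simp add: sum.reindex)
  finally show ?thesis by (simp add: sum.distrib)
qed

lemma homlist_map2:
  assumes "length cs = length xs"
  shows "homlist G0 G1 cs (map2 pj cs xs)"
  using assms by (auto simp: homlist_def)

lemma ml_expand_gen:
  assumes "multilin scale F"
  shows "F (pre @ xs) = (\<Sum>bs\<in>{bs. length bs = length xs}. F (pre @ map2 pj bs xs))"
proof (induction xs arbitrary: pre)
  case Nil
  have "{bs :: bool list. length bs = 0} = {[]}" by auto
  then show ?case by simp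
next
  case (Cons x xs)
  have "F (pre @ x # xs) = F (pre @ (scale 1 (pj False x) + pj True x) # xs)"
    by (simp add: proj_split')
  also have "\<dots> = F (pre @ pj False x # xs) + F (pre @ pj True x # xs)"
    using assms[unfolded multilin_def, rule_format, where xs=pre and ys=xs and c=1 and x="pj False x" and y="pj True x"] by simp
  also have "\<dots> = (\<Sum>bs\<in>{bs. length bs = length xs}. F ((pre @ [pj False x]) @ map2 pj bs xs))
      + (\<Sum>bs\<in>{bs. length bs = length xs}. F ((pre @ [pj True x]) @ map2 pj bs xs))"
    using Cons.IH[of "pre @ [pj False x]"] Cons.IH[of "pre @ [pj True x]"] by simp
  also have "\<dots> = (\<Sum>bs\<in>{bs. length bs = length (x # xs)}. F (pre @ map2 pj bs (x # xs)))"
    by (simp add: sum_bool_lists_Suc sum.distrib)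
  finally show ?case .
qed

lemma ml_expand:
  assumes "multilin scale F"
  shows "F xs = hext G0 G1 (\<lambda>_ ys. F ys) xs"
  using ml_expand_gen[OF assms, of "[]" xs] by (simp add: hext_def)

lemma hext_cong:
  assumes "\<And>cs ys. length cs = length ys \<Longrightarrow> homlist G0 G1 cs ys \<Longrightarrow> \<Phi> cs ys = \<Psi> cs ys"
  shows "hext G0 G1 \<Phi> xs = hext G0 G1 \<Psi> xs"
  unfolding hext_def using assms homlist_map2 by (intro sum.cong) auto

lemma map2_proj_hom:
  assumes "homlist G0 G1 bs xs"
  shows "map2 pj bs xs = xs"
  using assms by (auto simp: homlist_def proj_hom intro!: nth_equalityI)

lemma hext_hom:
  assumes "homlist G0 G1 bs xs"
    and "\<And>cs ys i. length cs = length ys \<Longrightarrow> length ys = length xs \<Longrightarrow> i < length ys \<Longrightarrow> ys ! i = 0 \<Longrightarrow> \<Phi> cs ys = 0"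
  shows "hext G0 G1 \<Phi> xs = \<Phi> bs xs"
proof -
  have lb: "length bs = length xs" using assms(1) by (simp add: homlist_def)
  have "hext G0 G1 \<Phi> xs = (\<Sum>cs\<in>{bs}. \<Phi> cs (map2 pj cs xs))"
    unfolding hext_def
  proof (rule sum.mono_neutral_right)
    show "{bs} \<subseteq> {bs. length bs = length xs}" using lb by simp
    show "\<forall>cs\<in>{bs. length bs = length xs} - {bs}. \<Phi> cs (map2 pj cs xs) = 0"
    proof
      fix cs assume cs: "cs \<in> {bs. length bs = length xs} - {bs}"
      then have lc: "length cs = length xs" and ne: "cs \<noteq> bs" by auto
      have "\<exists>i < length xs. cs ! i \<noteq> bs ! i"
      proof (rule ccontr)
        assume "\<not> (\<exists>i < length xs. cs ! i \<noteq> bs ! i)"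
        then have "cs = bs" using lc lb by (auto intro: nth_equalityI)
        then show False using ne by simp
      qed
      then obtain i where i: "i < length xs" "cs ! i \<noteq> bs ! i" by blast
      have "xs ! i \<in> hc (bs ! i)" using assms(1) i by (simp add: homlist_def)
      then have "map2 pj cs xs ! i = 0" using i lc proj_hom0' by simp
      then show "\<Phi> cs (map2 pj cs xs) = 0" using assms(2)[of cs "map2 pj cs xs" i] lc i by simp
    qed
  qed simp
  also have "\<dots> = \<Phi> bs xs" using map2_proj_hom[OF assms(1)] by simp
  finally show ?thesis .
qed

lemma map2_append_upd:
  assumes "length cs = length xs + Suc (length ys)"
  shows "map2 pj cs (xs @ u # ys) = (map2 pj cs (xs @ 0 # ys))[length xs := pj (cs ! length xs) u]"
  using assms by (auto intro!: nth_equalityI simp: nth_append nth_list_update)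

lemma hext_multilin:
  assumes "\<And>cs ys j c x y. length cs = length ys \<Longrightarrow> j < length ys \<Longrightarrow>
     \<Phi> cs (ys[j := scale c x + y]) = c * \<Phi> cs (ys[j := x]) + \<Phi> cs (ys[j := y])"
  shows "multilin scale (hext G0 G1 \<Phi>)"
  unfolding multilin_def
proof (intro allI)
  fix xs ys :: "'g list" and c :: complex and x y :: 'g
  let ?n = "length (xs @ x # ys)"
  let ?j = "length xs"
  have "hext G0 G1 \<Phi> (xs @ (scale c x + y) # ys) =
     (\<Sum>cs\<in>{cs. length cs = ?n}. c * \<Phi> cs (map2 pj cs (xs @ x # ys)) + \<Phi> cs (map2 pj cs (xs @ y # ys)))"
    unfolding hext_def
  proof (rule sum.cong)
    fix cs :: "bool list" assume "cs \<in> {cs. length cs = ?n}"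
    then have lc: "length cs = ?j + Suc (length ys)" by simp
    let ?w = "map2 pj cs (xs @ 0 # ys)"
    have lw: "length ?w = length cs" using lc by simp
    have "\<Phi> cs (map2 pj cs (xs @ (scale c x + y) # ys)) = \<Phi> cs (?w[?j := scale c (pj (cs ! ?j) x) + pj (cs ! ?j) y])"
      by (subst map2_append_upd[OF lc]) (simp add: proj_lin)
    also have "\<dots> = c * \<Phi> cs (?w[?j := pj (cs ! ?j) x]) + \<Phi> cs (?w[?j := pj (cs ! ?j) y])"
      using assms[of cs ?w ?j] lw lc by simp
    finally show "\<Phi> cs (map2 pj cs (xs @ (scale c x + y) # ys)) =
      c * \<Phi> cs (map2 pj cs (xs @ x # ys)) + \<Phi> cs (map2 pj cs (xs @ y # ys))"
      by (simp only: map2_append_upd[OF lc, of x] map2_append_upd[OF lc, of y])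
  qed simp
  also have "\<dots> = c * hext G0 G1 \<Phi> (xs @ x # ys) + hext G0 G1 \<Phi> (xs @ y # ys)"
    by (simp add: hext_def sum.distrib sum_distrib_left)
  finally show "hext G0 G1 \<Phi> (xs @ (scale c x + y) # ys) = c * hext G0 G1 \<Phi> (xs @ x # ys) + hext G0 G1 \<Phi> (xs @ y # ys)" .
qed

lemma homlist_length: "homlist G0 G1 bs xs \<Longrightarrow> length bs = length xs"
  by (simp add: homlist_def)

lemma ml_eq_on_hom:
  assumes "multilin scale F" "multilin scale G"
    and "\<And>bs xs. homlist G0 G1 bs xs \<Longrightarrow> F xs = G xs"
  shows "F = G"
proof
  fix xs
  show "F xs = G xs"
    using ml_expand[OF assms(1), of xs] ml_expand[OF assms(2), of xs]
      hext_cong[of "\<lambda>_ ys. F ys" "\<lambda>_ ys. G ys" xs] assms(3) by metis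
qed

end

section \<open>The sign eps\<close>

lemma perm_of: "p permutes {..<(n::nat)} \<Longrightarrow> permutation p"
  unfolding permutation_permutes by (intro exI[of _ "{..<n}"]) simp

definition sg :: "bool \<Rightarrow> complex" where "sg b = (if b then -1 else 1)"

lemma sg_psgn: "sg = psgn" by (auto simp: sg_def psgn_def fun_eq_iff)

lemma prod_sg_card:
  assumes "finite D"
  shows "(\<Prod>x\<in>D. psgn (P x)) = (-1) ^ card {x\<in>D. P x}"
proof -
  have "(\<Prod>x\<in>D. psgn (P x)) = (\<Prod>x\<in>D. if P x then -1 else 1)"
    by (simp add: psgn_def)
  also have "\<dots> = (\<Prod>x\<in>D \<inter> {x. P x}. -1) * (\<Prod>x\<in>D \<inter> - {x. P x}. 1)"
    using assms by (rule prod.If_cases)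
  also have "\<dots> = (-1) ^ card (D \<inter> {x. P x})" by simp
  also have "D \<inter> {x. P x} = {x\<in>D. P x}" by auto
  finally show ?thesis .
qed

definition Dp :: "bool list \<Rightarrow> (nat \<times> nat) set" where
  "Dp bs = {(u, v). u < v \<and> v < length bs \<and> bs ! u \<and> bs ! v}"

lemma finite_Dp [simp]: "finite (Dp bs)"
  by (rule finite_subset[of _ "{..<length bs} \<times> {..<length bs}"]) (auto simp: Dp_def)

definition revp :: "(nat \<Rightarrow> nat) \<Rightarrow> nat \<times> nat \<Rightarrow> bool" where
  "revp \<pi> uv = (inv \<pi> (snd uv) < inv \<pi> (fst uv))"

lemma eps_prod:
  assumes p: "\<pi> permutes {..<length bs}"
  shows "eps \<pi> bs = (\<Prod>x\<in>Dp bs. psgn (revp \<pi> x))"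
proof -
  let ?I = "{(i, j). i < j \<and> j < length bs \<and> \<pi> j < \<pi> i \<and> bs ! (\<pi> i) \<and> bs ! (\<pi> j)}"
  let ?R = "{x\<in>Dp bs. revp \<pi> x}"
  have lt: "\<And>i. i < length bs \<Longrightarrow> \<pi> i < length bs"
    using permutes_in_image[OF p] by simp
  have lti: "\<And>i. i < length bs \<Longrightarrow> inv \<pi> i < length bs"
    using permutes_in_image[OF permutes_inv[OF p]] by simp
  have "bij_betw (\<lambda>(i, j). (\<pi> j, \<pi> i)) ?I ?R"
  proof (rule bij_betw_byWitness[where f' = "\<lambda>(u, v). (inv \<pi> v, inv \<pi> u)"])
    show "\<forall>a\<in>?I. (\<lambda>(u, v). (inv \<pi> v, inv \<pi> u)) ((\<lambda>(i, j). (\<pi> j, \<pi> i)) a) = a"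
      by (auto simp: permutes_inverses[OF p])
    show "\<forall>a\<in>?R. (\<lambda>(i, j). (\<pi> j, \<pi> i)) ((\<lambda>(u, v). (inv \<pi> v, inv \<pi> u)) a) = a"
      by (auto simp: permutes_inverses[OF p])
    show "(\<lambda>(i, j). (\<pi> j, \<pi> i)) ` ?I \<subseteq> ?R"
      using lt by (auto simp: Dp_def revp_def permutes_inverses[OF p])
    show "(\<lambda>(u, v). (inv \<pi> v, inv \<pi> u)) ` ?R \<subseteq> ?I"
    proof
      fix x assume "x \<in> (\<lambda>(u, v). (inv \<pi> v, inv \<pi> u)) ` ?R"
      then obtain u v where uv: "(u, v) \<in> Dp bs" "revp \<pi> (u, v)" "x = (inv \<pi> v, inv \<pi> u)" by auto
      then show "x \<in> ?I" using lti by (auto simp: Dp_def revp_def permutes_inverses[OF p])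
    qed
  qed
  then have "card ?I = card ?R" by (rule bij_betw_same_card)
  then show ?thesis unfolding eps_def prod_sg_card[OF finite_Dp] by simp
qed

lemma eps_cocycle:
  assumes s: "\<sigma> permutes {..<length bs}" and t: "\<tau> permutes {..<length bs}"
  shows "eps (\<sigma> \<circ> \<tau>) bs = eps \<sigma> bs * eps \<tau> (permute_list \<sigma> bs)"
proof -
  let ?n = "length bs"
  let ?cs = "permute_list \<sigma> bs"
  have lcs: "length ?cs = ?n" by simp
  have st: "\<sigma> \<circ> \<tau> permutes {..<?n}" by (rule permutes_compose[OF t s])
  have invst: "inv (\<sigma> \<circ> \<tau>) = inv \<tau> \<circ> inv \<sigma>"
    using permutes_bij[OF s] permutes_bij[OF t] by (simp add: o_inv_distrib)
  have lts: "\<And>i. i < ?n \<Longrightarrow> inv \<sigma> i < ?n"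
    using permutes_in_image[OF permutes_inv[OF s]] by simp
  have ls: "\<And>i. i < ?n \<Longrightarrow> \<sigma> i < ?n"
    using permutes_in_image[OF s] by simp
  have csn: "\<And>p. p < ?n \<Longrightarrow> ?cs ! p = bs ! \<sigma> p"
    using permute_list_nth[OF s] by simp
  define g where "g = (\<lambda>(u, v). (min (inv \<sigma> u) (inv \<sigma> v), max (inv \<sigma> u) (inv \<sigma> v)))"
  define h where "h = (\<lambda>(p, q). (min (\<sigma> p) (\<sigma> q), max (\<sigma> p) (\<sigma> q)))"
  have injs: "\<And>a b. inv \<sigma> a = inv \<sigma> b \<Longrightarrow> a = b"
    by (metis permutes_inverses(1)[OF s])
  have injs': "\<And>a b. \<sigma> a = \<sigma> b \<Longrightarrow> a = b"
    by (metis permutes_inverses(2)[OF s])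
  have bij: "bij_betw g (Dp bs) (Dp ?cs)"
  proof (rule bij_betw_byWitness[where f' = h])
    show "\<forall>a\<in>Dp bs. h (g a) = a"
    proof
      fix a assume "a \<in> Dp bs"
      then obtain u v where uv: "a = (u, v)" "u < v" by (auto simp: Dp_def)
      then show "h (g a) = a"
        by (cases "inv \<sigma> u \<le> inv \<sigma> v") (simp_all add: g_def h_def min_def max_def permutes_inverses[OF s])
    qed
    show "\<forall>a\<in>Dp ?cs. g (h a) = a"
    proof
      fix a assume "a \<in> Dp ?cs"
      then obtain p q where uv: "a = (p, q)" "p < q" by (auto simp: Dp_def)
      then show "g (h a) = a"
        by (cases "\<sigma> p \<le> \<sigma> q") (simp_all add: g_def h_def min_def max_def permutes_inverses[OF s])
    qed
    show "g ` Dp bs \<subseteq> Dp ?cs"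
    proof
      fix x assume "x \<in> g ` Dp bs"
      then obtain u v where uv: "u < v" "v < ?n" "bs ! u" "bs ! v" "x = g (u, v)"
        by (auto simp: Dp_def)
      have ne: "inv \<sigma> u \<noteq> inv \<sigma> v" using uv injs by fastforce
      show "x \<in> Dp ?cs"
        using uv ne lts[of u] lts[of v] csn[of "inv \<sigma> u"] csn[of "inv \<sigma> v"]
        by (auto simp: Dp_def g_def min_def max_def permutes_inverses[OF s])
    qed
    show "h ` Dp ?cs \<subseteq> Dp bs"
    proof
      fix x assume "x \<in> h ` Dp ?cs"
      then obtain p q where pq: "p < q" "q < ?n" "?cs ! p" "?cs ! q" "x = h (p, q)"
        by (auto simp: Dp_def)
      have ne: "\<sigma> p \<noteq> \<sigma> q" using pq injs' by fastforce
      show "x \<in> Dp bs"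
        using pq ne ls[of p] ls[of q] csn[of p] csn[of q]
        by (auto simp: Dp_def h_def min_def max_def)
    qed
  qed
  have key: "\<And>x. x \<in> Dp bs \<Longrightarrow> psgn (revp (\<sigma> \<circ> \<tau>) x) = psgn (revp \<sigma> x) * psgn (revp \<tau> (g x))"
  proof -
    fix x assume x: "x \<in> Dp bs"
    then obtain u v where uv: "x = (u, v)" "u < v" "v < ?n" by (auto simp: Dp_def)
    have ne: "inv \<sigma> u \<noteq> inv \<sigma> v" using uv injs by fastforce
    have ne2: "inv \<tau> (inv \<sigma> u) \<noteq> inv \<tau> (inv \<sigma> v)"
      using ne by (metis permutes_inverses(1)[OF t])
    show "psgn (revp (\<sigma> \<circ> \<tau>) x) = psgn (revp \<sigma> x) * psgn (revp \<tau> (g x))"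
      using ne ne2 unfolding uv revp_def invst g_def
      by (cases "inv \<sigma> u < inv \<sigma> v") (auto simp: psgn_def min_def max_def)
  qed
  have "eps (\<sigma> \<circ> \<tau>) bs = (\<Prod>x\<in>Dp bs. psgn (revp (\<sigma> \<circ> \<tau>) x))"
    by (rule eps_prod[OF st])
  also have "\<dots> = (\<Prod>x\<in>Dp bs. psgn (revp \<sigma> x) * psgn (revp \<tau> (g x)))"
    using key by (rule prod.cong[OF refl])
  also have "\<dots> = (\<Prod>x\<in>Dp bs. psgn (revp \<sigma> x)) * (\<Prod>x\<in>Dp bs. psgn (revp \<tau> (g x)))"
    by (rule prod.distrib)
  also have "(\<Prod>x\<in>Dp bs. psgn (revp \<tau> (g x))) = (\<Prod>y\<in>Dp ?cs. psgn (revp \<tau> y))"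
    using bij by (rule prod.reindex_bij_betw)
  also have "(\<Prod>x\<in>Dp bs. psgn (revp \<sigma> x)) = eps \<sigma> bs"
    by (rule eps_prod[OF s, symmetric])
  also have "(\<Prod>y\<in>Dp ?cs. psgn (revp \<tau> y)) = eps \<tau> ?cs"
    using eps_prod[of \<tau> ?cs] t by simp
  finally show ?thesis .
qed

lemma eps_ident [simp]: "eps (\<lambda>x. x) bs = 1"
proof -
  have "{(i, j). i < j \<and> j < length bs \<and> (\<lambda>x::nat. x) j < (\<lambda>x::nat. x) i \<and> bs ! ((\<lambda>x::nat. x) i) \<and> bs ! ((\<lambda>x::nat. x) j)} = {}" by auto
  then show ?thesis unfolding eps_def by (simp only:) simp
qed

lemma eps_id [simp]: "eps id bs = 1"
  using eps_ident by (simp add: id_def)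

definition shiftp :: "nat \<Rightarrow> (nat \<Rightarrow> nat) \<Rightarrow> nat \<Rightarrow> nat" where
  "shiftp m \<tau> = (\<lambda>i. if i < m then i else \<tau> (i - m) + m)"

lemma shiftp_permutes:
  assumes "\<tau> permutes {..<k}"
  shows "shiftp m \<tau> permutes {..<m + k}"
proof -
  have bij: "bij \<tau>" using permutes_bij[OF assms] .
  show ?thesis
    unfolding permutes_def
  proof (intro conjI allI impI)
    fix x assume "x \<notin> {..<m + k}"
    then have "x - m \<notin> {..<k}" "\<not> x < m" by auto
    then show "shiftp m \<tau> x = x" using permutes_not_in[OF assms] by (simp add: shiftp_def)
  next
    fix y
    show "\<exists>!x. shiftp m \<tau> x = y"
    proof (cases "y < m")
      case True
      show ?thesis
      proof (rule ex1I[of _ y])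
        show "shiftp m \<tau> y = y" using True by (simp add: shiftp_def)
        fix x assume "shiftp m \<tau> x = y"
        then show "x = y" using True by (auto simp: shiftp_def split: if_splits)
      qed
    next
      case False
      show ?thesis
      proof (rule ex1I[of _ "inv \<tau> (y - m) + m"])
        show "shiftp m \<tau> (inv \<tau> (y - m) + m) = y"
          using False by (simp add: shiftp_def permutes_inverses[OF assms])
        fix x assume x: "shiftp m \<tau> x = y"
        show "x = inv \<tau> (y - m) + m"
        proof (cases "x < m")
          case True then show ?thesis using x False by (simp add: shiftp_def)
        next
          case F2: False
          then have "\<tau> (x - m) = y - m" using x by (auto simp: shiftp_def)
          then have "x - m = inv \<tau> (y - m)" by (metis permutes_inverses(2)[OF assms])
          then show ?thesis using F2 by simp
        qed
      qed
    qed
  qed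
qed

lemma shiftp_id [simp]: "shiftp m id = id"
  by (auto simp: shiftp_def fun_eq_iff)

lemma shiftp_ident [simp]: "shiftp m (\<lambda>x. x) = (\<lambda>x. x)"
  by (auto simp: shiftp_def fun_eq_iff)

lemma shiftp_comp_transpose:
  "shiftp m (Transposition.transpose a b \<circ> p) = Transposition.transpose (a + m) (b + m) \<circ> shiftp m p"
  by (auto simp: shiftp_def fun_eq_iff Transposition.transpose_def)

lemma sign_shiftp:
  assumes "\<tau> permutes {..<k}"
  shows "sign (shiftp m \<tau>) = sign \<tau>"
  using assms finite_lessThan[of k]
proof (induction rule: permutes_induct)
  case id then show ?case by simp
next
  case (swap a b p)
  have pp: "permutation p" using swap.hyps(4) by (rule perm_of)
  have ps: "permutation (shiftp m p)"
    using shiftp_permutes[OF swap.hyps(4), of m] by (rule perm_of)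
  have "sign (shiftp m (Transposition.transpose a b \<circ> p)) = sign (Transposition.transpose (a + m) (b + m)) * sign (shiftp m p)"
    unfolding shiftp_comp_transpose by (rule sign_compose[OF permutation_swap_id ps])
  also have "\<dots> = sign (Transposition.transpose a b) * sign p"
    using swap.hyps(3) swap.IH by (simp add: sign_swap_id)
  also have "\<dots> = sign (Transposition.transpose a b \<circ> p)"
    by (rule sign_compose[OF permutation_swap_id pp, symmetric])
  finally show ?case .
qed

lemma permute_list_shiftp:
  assumes "\<tau> permutes {..<length xs - m}" "m \<le> length xs"
  shows "permute_list (shiftp m \<tau>) xs = take m xs @ permute_list \<tau> (drop m xs)"
proof (rule nth_equalityI)
  show "length (permute_list (shiftp m \<tau>) xs) = length (take m xs @ permute_list \<tau> (drop m xs))"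
    using assms by simp
  fix i assume i: "i < length (permute_list (shiftp m \<tau>) xs)"
  show "permute_list (shiftp m \<tau>) xs ! i = (take m xs @ permute_list \<tau> (drop m xs)) ! i"
  proof (cases "i < m")
    case True then show ?thesis using i assms by (simp add: permute_list_def shiftp_def nth_append)
  next
    case False
    have "\<tau> (i - m) < length xs - m"
      using permutes_in_image[OF assms(1)] i False by simp
    then show ?thesis using i assms False
      by (simp add: permute_list_def shiftp_def nth_append add.commute)
  qed
qed

lemma eps_shiftp:
  assumes "\<tau> permutes {..<length bs - m}" "m \<le> length bs"
  shows "eps (shiftp m \<tau>) bs = eps \<tau> (drop m bs)"
proof -
  let ?I = "{(i, j). i < j \<and> j < length bs \<and> shiftp m \<tau> j < shiftp m \<tau> i \<and> bs ! (shiftp m \<tau> i) \<and> bs ! (shiftp m \<tau> j)}"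
  let ?J = "{(i, j). i < j \<and> j < length (drop m bs) \<and> \<tau> j < \<tau> i \<and> drop m bs ! (\<tau> i) \<and> drop m bs ! (\<tau> j)}"
  have lt: "\<And>i. i < length bs - m \<Longrightarrow> \<tau> i < length bs - m"
    using permutes_in_image[OF assms(1)] by simp
  have "?I = (\<lambda>(i, j). (i + m, j + m)) ` ?J"
  proof
    show "?I \<subseteq> (\<lambda>(i, j). (i + m, j + m)) ` ?J"
    proof
      fix x assume x: "x \<in> ?I"
      then obtain i j where ij: "x = (i, j)" "i < j" "j < length bs"
        "shiftp m \<tau> j < shiftp m \<tau> i" "bs ! (shiftp m \<tau> i)" "bs ! (shiftp m \<tau> j)" by auto
      have im: "\<not> i < m"
      proof
        assume "i < m"
        then show False using ij by (auto simp: shiftp_def split: if_splits)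
      qed
      then have jm: "\<not> j < m" using ij by simp
      have "(i - m, j - m) \<in> ?J" using ij im jm assms(2) by (auto simp: shiftp_def add.commute)
      moreover have "x = (\<lambda>(i, j). (i + m, j + m)) (i - m, j - m)" using ij im jm by simp
      ultimately show "x \<in> (\<lambda>(i, j). (i + m, j + m)) ` ?J" by blast
    qed
    show "(\<lambda>(i, j). (i + m, j + m)) ` ?J \<subseteq> ?I"
      using assms(2) by (auto simp: shiftp_def add.commute)
  qed
  moreover have "inj_on (\<lambda>(i, j). (i + m, j + m)) ?J" by (auto simp: inj_on_def)
  ultimately have "card ?I = card ?J" by (simp add: card_image)
  then show ?thesis unfolding eps_def by simp
qed

definition frontp :: "nat \<Rightarrow> nat \<Rightarrow> nat" where
  "frontp i = (\<lambda>l. if l = 0 then i else if l \<le> i then l - 1 else l)"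

lemma frontp_0 [simp]: "frontp 0 = id"
  by (auto simp: frontp_def fun_eq_iff)

lemma frontp_Suc: "frontp (Suc i) = Transposition.transpose i (Suc i) \<circ> frontp i"
  by (auto simp: frontp_def fun_eq_iff Transposition.transpose_def)

lemma frontp_permutes:
  assumes "i < n"
  shows "frontp i permutes {..<n}"
  using assms
proof (induction i)
  case 0 show ?case by (simp only: frontp_0) (rule permutes_id)
next
  case (Suc i)
  have "Transposition.transpose i (Suc i) permutes {..<n}"
    using Suc.prems by (intro permutes_swap_id) auto
  then show ?case unfolding frontp_Suc using Suc by (intro permutes_compose) auto
qed

lemma sign_frontp:
  assumes "i < n"
  shows "sign (frontp i) = (-1) ^ i"
  using assms
proof (induction i)
  case 0 then show ?case by simp
next
  case (Suc i)
  have p: "permutation (frontp i)"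
    using Suc.prems by (intro perm_of[of _ n] frontp_permutes) simp
  have "sign (frontp (Suc i)) = sign (Transposition.transpose i (Suc i)) * sign (frontp i)"
    unfolding frontp_Suc by (rule sign_compose[OF permutation_swap_id p])
  also have "\<dots> = - ((-1) ^ i)"
    using Suc by (simp add: sign_swap_id)
  finally show ?case by simp
qed

lemma permute_list_frontp:
  assumes "i < length xs"
  shows "permute_list (frontp i) xs = xs ! i # take i xs @ drop (Suc i) xs"
proof (rule nth_equalityI)
  show "length (permute_list (frontp i) xs) = length (xs ! i # take i xs @ drop (Suc i) xs)"
    using assms by simp
  fix l assume l: "l < length (permute_list (frontp i) xs)"
  show "permute_list (frontp i) xs ! l = (xs ! i # take i xs @ drop (Suc i) xs) ! l"
  proof (cases l)
    case 0 then show ?thesis using l by (simp add: permute_list_def frontp_def)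
  next
    case (Suc l')
    then show ?thesis using l assms
      by (auto simp: permute_list_def frontp_def nth_append min_def)
  qed
qed

lemma card_true_psum:
  "(-1::complex) ^ card {l. l < length cs \<and> cs ! l} = psgn (psum cs)"
proof (induction cs)
  case Nil then show ?case by simp
next
  case (Cons c cs)
  have eq: "{l. l < length (c # cs) \<and> (c # cs) ! l} = (if c then {0} else {}) \<union> Suc ` {l. l < length cs \<and> cs ! l}"
  proof (rule set_eqI)
    fix l show "l \<in> {l. l < length (c # cs) \<and> (c # cs) ! l} \<longleftrightarrow> l \<in> (if c then {0} else {}) \<union> Suc ` {l. l < length cs \<and> cs ! l}"
      by (cases l) auto
  qed
  have "card {l. l < length (c # cs) \<and> (c # cs) ! l} = (if c then 1 else 0) + card {l. l < length cs \<and> cs ! l}"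
    unfolding eq by (subst card_Un_disjoint) (auto simp: card_image)
  then show ?case using Cons by (cases c) (auto simp: psgn_def)
qed

lemma eps_frontp:
  assumes "i < length bs"
  shows "eps (frontp i) bs = psgn (bs ! i \<and> psum (take i bs))"
proof -
  let ?I = "{(a, b). a < b \<and> b < length bs \<and> frontp i b < frontp i a \<and> bs ! (frontp i a) \<and> bs ! (frontp i b)}"
  let ?J = "{l. l < i \<and> bs ! i \<and> bs ! l}"
  have "?I = (\<lambda>l. (0, Suc l)) ` ?J"
  proof
    show "?I \<subseteq> (\<lambda>l. (0, Suc l)) ` ?J"
    proof
      fix x assume "x \<in> ?I"
      then obtain a b where ab: "x = (a, b)" "a < b" "b < length bs" "frontp i b < frontp i a"
        "bs ! (frontp i a)" "bs ! (frontp i b)" by auto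
      have a0: "a = 0" using ab by (auto simp: frontp_def split: if_splits)
      then have "b \<le> i" using ab by (auto simp: frontp_def split: if_splits)
      then have "b - 1 \<in> ?J" "x = (0, Suc (b - 1))" using ab a0 by (auto simp: frontp_def split: if_splits)
      then show "x \<in> (\<lambda>l. (0, Suc l)) ` ?J" by blast
    qed
    show "(\<lambda>l. (0, Suc l)) ` ?J \<subseteq> ?I"
      using assms by (auto simp: frontp_def)
  qed
  then have "card ?I = card ?J" by (simp add: card_image inj_on_def)
  moreover have "card ?J = (if bs ! i then card {l. l < length (take i bs) \<and> take i bs ! l} else 0)"
    using assms by (auto intro: arg_cong[where f=card])
  ultimately show ?thesis
    unfolding eps_def using card_true_psum[of "take i bs"] by (auto simp: psgn_def)
qed

section \<open>Super-alternation\<close>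

definition Alt :: "nat \<Rightarrow> (bool list \<Rightarrow> 'g list \<Rightarrow> complex) \<Rightarrow> bool list \<Rightarrow> 'g list \<Rightarrow> complex" where
  "Alt n H bs xs = (\<Sum>\<rho>\<in>{\<rho>. \<rho> permutes {..<n}}. of_int (sign \<rho>) * eps \<rho> bs * H (permute_list \<rho> bs) (permute_list \<rho> xs))"

lemma Alt_reindex:
  assumes s: "\<sigma> permutes {..<n}" and l: "length bs = n" "length xs = n"
  shows "Alt n H bs xs = Alt n (\<lambda>cs ys. of_int (sign \<sigma>) * eps \<sigma> cs * H (permute_list \<sigma> cs) (permute_list \<sigma> ys)) bs xs"
proof -
  have "Alt n (\<lambda>cs ys. of_int (sign \<sigma>) * eps \<sigma> cs * H (permute_list \<sigma> cs) (permute_list \<sigma> ys)) bs xs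
     = (\<Sum>\<rho>\<in>{\<rho>. \<rho> permutes {..<n}}. of_int (sign (\<rho> \<circ> \<sigma>)) * eps (\<rho> \<circ> \<sigma>) bs * H (permute_list (\<rho> \<circ> \<sigma>) bs) (permute_list (\<rho> \<circ> \<sigma>) xs))"
    unfolding Alt_def
  proof (rule sum.cong[OF refl])
    fix \<rho> assume r: "\<rho> \<in> {\<rho>. \<rho> permutes {..<n}}"
    then have r': "\<rho> permutes {..<n}" by simp
    have pr: "permutation \<rho>" "permutation \<sigma>" using r' s by (auto intro: perm_of)
    have "eps (\<rho> \<circ> \<sigma>) bs = eps \<rho> bs * eps \<sigma> (permute_list \<rho> bs)"
      using eps_cocycle[of \<rho> bs \<sigma>] r' s l(1) by simp
    moreover have "permute_list (\<rho> \<circ> \<sigma>) bs = permute_list \<sigma> (permute_list \<rho> bs)"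
      using permute_list_compose[of \<sigma> bs \<rho>] s l(1) by simp
    moreover have "permute_list (\<rho> \<circ> \<sigma>) xs = permute_list \<sigma> (permute_list \<rho> xs)"
      using permute_list_compose[of \<sigma> xs \<rho>] s l(2) by simp
    moreover have "sign (\<rho> \<circ> \<sigma>) = sign \<rho> * sign \<sigma>" using pr by (simp add: sign_compose)
    ultimately show "of_int (sign \<rho>) * eps \<rho> bs * (of_int (sign \<sigma>) * eps \<sigma> (permute_list \<rho> bs) *
          H (permute_list \<sigma> (permute_list \<rho> bs)) (permute_list \<sigma> (permute_list \<rho> xs))) =
        of_int (sign (\<rho> \<circ> \<sigma>)) * eps (\<rho> \<circ> \<sigma>) bs * H (permute_list (\<rho> \<circ> \<sigma>) bs) (permute_list (\<rho> \<circ> \<sigma>) xs)"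
      by (simp only: of_int_mult mult_ac)
  qed
  also have "\<dots> = Alt n H bs xs"
    unfolding Alt_def
    by (rule sum_permutations_compose_right[OF s, of "\<lambda>\<rho>. of_int (sign \<rho>) * eps \<rho> bs * H (permute_list \<rho> bs) (permute_list \<rho> xs)", symmetric])
  finally show ?thesis by simp
qed

context LSA
begin

lemma homlist_Nil [simp]: "homlist G0 G1 [] []"
  by (simp add: homlist_def)

lemma homlist_Cons [simp]: "homlist G0 G1 (b # bs) (x # xs) \<longleftrightarrow> x \<in> hc b \<and> homlist G0 G1 bs xs"
  by (auto simp: homlist_def nth_Cons split: nat.splits)

lemma homlist_nth: "homlist G0 G1 bs xs \<Longrightarrow> i < length xs \<Longrightarrow> xs ! i \<in> hc (bs ! i)"
  by (simp add: homlist_def)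

lemma homlist_append [simp]:
  "length bs = length xs \<Longrightarrow> homlist G0 G1 (bs @ cs) (xs @ ys) \<longleftrightarrow> homlist G0 G1 bs xs \<and> homlist G0 G1 cs ys"
  by (induction bs xs rule: list_induct2) auto

lemma homlist_take: "homlist G0 G1 bs xs \<Longrightarrow> homlist G0 G1 (take a bs) (take a xs)"
  by (auto simp: homlist_def)

lemma homlist_drop: "homlist G0 G1 bs xs \<Longrightarrow> homlist G0 G1 (drop a bs) (drop a xs)"
  by (auto simp: homlist_def)

lemma homlist_permute:
  assumes "homlist G0 G1 bs xs" "\<sigma> permutes {..<length xs}"
  shows "homlist G0 G1 (permute_list \<sigma> bs) (permute_list \<sigma> xs)"
proof -
  have l: "length bs = length xs" using assms(1) by (simp add: homlist_def)
  show ?thesis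
    unfolding homlist_def
  proof (intro conjI allI impI)
    show "length (permute_list \<sigma> bs) = length (permute_list \<sigma> xs)" using l by simp
    fix i assume i: "i < length (permute_list \<sigma> xs)"
    have si: "\<sigma> i < length xs" using permutes_in_image[OF assms(2)] i by simp
    show "permute_list \<sigma> xs ! i \<in> hc (permute_list \<sigma> bs ! i)"
      using i si l assms(1) permute_list_nth[OF assms(2)] permute_list_nth[of \<sigma> bs] assms(2)
      by (simp add: homlist_def)
  qed
qed

lemma Pforms_lin:
  assumes F: "F \<in> Pforms scale G0 G1" and G: "G \<in> Pforms scale G0 G1"
  shows "(\<lambda>xs. c * F xs + G xs) \<in> Pforms scale G0 G1"
proof -
  have mF: "multilin scale F" and mG: "multilin scale G"
    using F G by (auto simp: Pforms_def)
  obtain N1 where N1: "\<forall>xs. N1 < length xs \<longrightarrow> F xs = 0" using F by (auto simp: Pforms_def fin_order_def)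
  obtain N2 where N2: "\<forall>xs. N2 < length xs \<longrightarrow> G xs = 0" using G by (auto simp: Pforms_def fin_order_def)
  have sF: "supersym G0 G1 F" and sG: "supersym G0 G1 G" using F G by (auto simp: Pforms_def)
  have "multilin scale (\<lambda>xs. c * F xs + G xs)"
    using mF mG unfolding multilin_def by (simp add: algebra_simps)
  moreover have "fin_order (\<lambda>xs. c * F xs + G xs)"
    unfolding fin_order_def using N1 N2 by (intro exI[of _ "max N1 N2"]) auto
  moreover have "supersym G0 G1 (\<lambda>xs. c * F xs + G xs)"
    using sF sG unfolding supersym_def by (simp add: algebra_simps)
  ultimately show ?thesis by (simp add: Pforms_def)
qed

lemma Pforms_zero: "(\<lambda>_. 0) \<in> Pforms scale G0 G1"
  by (simp add: Pforms_def multilin_def fin_order_def supersym_def)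

lemma Pforms_sum:
  assumes "\<And>i. i \<in> I \<Longrightarrow> F i \<in> Pforms scale G0 G1"
  shows "(\<lambda>xs. \<Sum>i\<in>I. c i * F i xs) \<in> Pforms scale G0 G1"
  using assms
proof (induction I rule: infinite_finite_induct)
  case (infinite A) then show ?case by (simp add: Pforms_zero)
next
  case empty then show ?case by (simp add: Pforms_zero)
next
  case (insert a A)
  have "(\<lambda>xs. c a * F a xs + (\<lambda>xs. \<Sum>i\<in>A. c i * F i xs) xs) \<in> Pforms scale G0 G1"
    using insert by (intro Pforms_lin) auto
  then show ?case using insert by simp
qed

lemma constf_Pforms: "constf c \<in> Pforms scale G0 G1"
proof -
  have "multilin scale (constf c :: 'g list \<Rightarrow> complex)"
    by (simp add: multilin_def constf_def)
  moreover have "fin_order (constf c :: 'g list \<Rightarrow> complex)"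
    by (auto simp: fin_order_def constf_def intro!: exI[of _ 0])
  moreover have "supersym G0 G1 (constf c)"
  proof -
    have "permute_list \<sigma> xs = [] \<longleftrightarrow> xs = []" for \<sigma> and xs :: "'g list"
      by (metis length_permute_list length_0_conv)
    then show ?thesis by (auto simp: supersym_def constf_def)
  qed
  ultimately show ?thesis by (simp add: Pforms_def)
qed

definition compo :: "nat \<Rightarrow> ('g list \<Rightarrow> complex) \<Rightarrow> 'g list \<Rightarrow> complex" where
  "compo k F = (\<lambda>xs. if length xs = k then F xs else 0)"

lemma compo_Pforms:
  assumes "F \<in> Pforms scale G0 G1"
  shows "compo k F \<in> Pforms scale G0 G1"
proof -
  have "multilin scale (compo k F)"
    using assms unfolding Pforms_def multilin_def compo_def by simp
  moreover have "fin_order (compo k F)"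
    by (auto simp: fin_order_def compo_def intro!: exI[of _ k])
  moreover have "supersym G0 G1 (compo k F)"
    using assms unfolding Pforms_def supersym_def compo_def by simp
  ultimately show ?thesis by (simp add: Pforms_def)
qed

lemma compo_decomp:
  assumes "F \<in> Pforms scale G0 G1"
  obtains N where "F = (\<lambda>xs. \<Sum>k\<in>{..N}. 1 * compo k F xs)"
proof -
  obtain N where N: "\<forall>xs. N < length xs \<longrightarrow> F xs = 0" using assms by (auto simp: Pforms_def fin_order_def)
  have "F xs = (\<Sum>k\<in>{..N}. 1 * compo k F xs)" for xs
  proof (cases "length xs \<le> N")
    case True
    then have "(\<Sum>k\<in>{..N}. 1 * compo k F xs) = (\<Sum>k\<in>{length xs}. F xs)"
      by (intro sum.mono_neutral_cong_right) (auto simp: compo_def)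
    then show ?thesis by simp
  next
    case False
    then show ?thesis using N by (auto simp: compo_def)
  qed
  then show ?thesis using that by blast
qed

section \<open>A homogeneous basis\<close>

definition Bs :: "bool \<Rightarrow> 'g set" where
  "Bs b = (SOME B. B \<subseteq> hc b \<and> independent B \<and> hc b \<subseteq> span B)"

lemma Bs_props: "Bs b \<subseteq> hc b" "independent (Bs b)" "hc b \<subseteq> span (Bs b)"
proof -
  obtain B where "B \<subseteq> hc b" "independent B" "hc b \<subseteq> span B"
    by (rule maximal_independent_subset[of "hc b"])
  then have "\<exists>B. B \<subseteq> hc b \<and> independent B \<and> hc b \<subseteq> span B" by blast
  from someI_ex[OF this] show "Bs b \<subseteq> hc b" "independent (Bs b)" "hc b \<subseteq> span (Bs b)"
    unfolding Bs_def by blast+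
qed

lemma Bs_finite: "finite (Bs b)"
proof -
  obtain T where T: "finite T" "span T = UNIV" using finspan by blast
  show ?thesis using independent_span_bound[OF T(1) Bs_props(2), of b] T(2) by simp
qed

definition Ix :: "(bool \<times> 'g) set" where "Ix = {(b, e). e \<in> Bs b}"

definition coord :: "bool \<times> 'g \<Rightarrow> 'g \<Rightarrow> complex" where
  "coord i x = representation (Bs (fst i)) (pj (fst i) x) (snd i)"

lemma Ix_split: "Ix = Pair False ` Bs False \<union> Pair True ` Bs True"
  unfolding Ix_def by (auto, case_tac a, auto)

lemma finite_Ix: "finite Ix"
  unfolding Ix_split using Bs_finite by simp

lemma Ix_hc: "i \<in> Ix \<Longrightarrow> snd i \<in> hc (fst i)"
  by (cases i) (auto simp: Ix_def dest: subsetD[OF Bs_props(1)])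

lemma pj_span: "pj b x \<in> span (Bs b)"
  using Bs_props(3) proj_in by blast

lemma coord_lin: "coord i (scale c x + y) = c * coord i x + coord i y"
proof -
  let ?B = "Bs (fst i)" and ?b = "fst i"
  have "representation ?B (scale c (pj ?b x) + pj ?b y)
      = (\<lambda>e. representation ?B (scale c (pj ?b x)) e + representation ?B (pj ?b y) e)"
    by (rule representation_add[OF Bs_props(2) pj_span span_scale[OF pj_span]])
  moreover have "representation ?B (scale c (pj ?b x)) = (\<lambda>e. c * representation ?B (pj ?b x) e)"
    by (rule representation_scale[OF Bs_props(2) pj_span])
  ultimately show ?thesis unfolding coord_def proj_lin by simp
qed

lemma sum_Pair: "(\<Sum>i\<in>Pair b ` B. f i) = (\<Sum>e\<in>B. f (b, e))"
  by (subst sum.reindex) (auto simp: inj_on_def)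

lemma coord_hom0: "x \<in> hc p \<Longrightarrow> fst i \<noteq> p \<Longrightarrow> coord i x = 0"
  unfolding coord_def using proj_hom0'[of x p "fst i"] by (simp add: representation_zero)

lemma coord_sum: "(\<Sum>i\<in>Ix. scale (coord i x) (snd i)) = x"
proof -
  have "(\<Sum>i\<in>Ix. scale (coord i x) (snd i))
      = (\<Sum>i\<in>Pair False ` Bs False. scale (coord i x) (snd i)) + (\<Sum>i\<in>Pair True ` Bs True. scale (coord i x) (snd i))"
    unfolding Ix_split using Bs_finite by (intro sum.union_disjoint) auto
  also have "\<dots> = (\<Sum>e\<in>Bs False. scale (representation (Bs False) (pj False x) e) e)
      + (\<Sum>e\<in>Bs True. scale (representation (Bs True) (pj True x) e) e)"
    by (simp add: sum_Pair coord_def)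
  also have "\<dots> = pj False x + pj True x"
    using sum_representation_eq[OF Bs_props(2) pj_span Bs_finite order_refl] by simp
  finally show ?thesis by (simp add: proj_split')
qed

definition phi :: "bool \<times> 'g \<Rightarrow> 'g list \<Rightarrow> complex" where
  "phi i = (\<lambda>xs. if length xs = 1 then coord i (hd xs) else 0)"

lemma phi_gdual: "phi i \<in> gdual scale"
  unfolding gdual_def
proof (intro CollectI conjI allI impI)
  show "multilin scale (phi i)"
    unfolding multilin_def
  proof (intro allI)
    fix xs ys :: "'g list" and c x y
    show "phi i (xs @ (scale c x + y) # ys) = c * phi i (xs @ x # ys) + phi i (xs @ y # ys)"
      by (cases "xs = [] \<and> ys = []") (auto simp: phi_def coord_lin)
  qed
  fix xs :: "'g list" assume "length xs \<noteq> 1"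
  then show "phi i xs = 0" by (simp add: phi_def)
qed

lemma gdual_Pforms:
  assumes "\<phi> \<in> gdual scale"
  shows "\<phi> \<in> Pforms scale G0 G1"
proof -
  have m: "multilin scale \<phi>" and z: "\<And>xs. length xs \<noteq> 1 \<Longrightarrow> \<phi> xs = 0"
    using assms by (auto simp: gdual_def)
  have "fin_order \<phi>" unfolding fin_order_def using z by (intro exI[of _ 1]) auto
  moreover have "supersym G0 G1 \<phi>"
    unfolding supersym_def
  proof (intro allI impI)
    fix bs xs \<sigma> assume h: "homlist G0 G1 bs xs" and s: "\<sigma> permutes {..<length xs}"
    show "eps \<sigma> bs * \<phi> (permute_list \<sigma> xs) = \<phi> xs"
    proof (cases "length xs = 1")
      case True
      then have "\<sigma> = id" using s by (simp add: lessThan_Suc)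
      then show ?thesis by simp
    next
      case False then show ?thesis using z by simp
    qed
  qed
  ultimately show ?thesis using m by (simp add: Pforms_def)
qed

end

locale LSS = LSA scale G0 G1 br
  for scale :: "complex \<Rightarrow> 'g::ab_group_add \<Rightarrow> 'g" and G0 G1 br +
  fixes s :: "('g list \<Rightarrow> complex) \<Rightarrow> ('g list \<Rightarrow> complex)"
  assumes SM: "is_s_map scale G0 G1 br s"
begin

lemma s_A: "F \<in> Pforms scale G0 G1 \<Longrightarrow> s F \<in> Aforms scale G0 G1"
  using SM by (simp add: is_s_map_def)

lemma s_ml: "F \<in> Pforms scale G0 G1 \<Longrightarrow> multilin scale (s F)"
  using s_A by (simp add: Aforms_def)

lemma s_lin: "F \<in> Pforms scale G0 G1 \<Longrightarrow> G \<in> Pforms scale G0 G1 \<Longrightarrow>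
   s (\<lambda>xs. c * F xs + G xs) = (\<lambda>xs. c * s F xs + s G xs)"
  using SM by (simp add: is_s_map_def)

lemma s_mult: "F \<in> Pforms scale G0 G1 \<Longrightarrow> G \<in> Pforms scale G0 G1 \<Longrightarrow>
   s (sprod G0 G1 F G) = wprod G0 G1 (s F) (s G)"
  using SM by (simp add: is_s_map_def)

lemma s_const: "s (constf c) = constf c"
  using SM by (simp add: is_s_map_def)

lemma s_gdual: "\<phi> \<in> gdual scale \<Longrightarrow> s \<phi> = dform G0 G1 br \<phi>"
  using SM by (simp add: is_s_map_def)

lemma s_zero: "s (\<lambda>_. 0) = (\<lambda>_. 0)"
proof -
  have "s (\<lambda>xs. (-1) * (\<lambda>_. 0) xs + (\<lambda>_. 0) xs) = (\<lambda>xs. (-1) * s (\<lambda>_. 0) xs + s (\<lambda>_. 0) xs)"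
    by (rule s_lin[OF Pforms_zero Pforms_zero])
  then show ?thesis by simp
qed

lemma s_sum:
  assumes "\<And>i. i \<in> I \<Longrightarrow> F i \<in> Pforms scale G0 G1"
  shows "s (\<lambda>xs. \<Sum>i\<in>I. c i * F i xs) = (\<lambda>xs. \<Sum>i\<in>I. c i * s (F i) xs)"
  using assms
proof (induction I rule: infinite_finite_induct)
  case (infinite A) then show ?case by (simp add: s_zero)
next
  case empty then show ?case by (simp add: s_zero)
next
  case (insert a A)
  have P: "(\<lambda>xs. \<Sum>i\<in>A. c i * F i xs) \<in> Pforms scale G0 G1"
    using insert by (intro Pforms_sum) auto
  have "s (\<lambda>xs. c a * F a xs + (\<lambda>xs. \<Sum>i\<in>A. c i * F i xs) xs)
      = (\<lambda>xs. c a * s (F a) xs + s (\<lambda>xs. \<Sum>i\<in>A. c i * F i xs) xs)"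
    using insert P by (intro s_lin) auto
  then show ?case using insert by simp
qed

end

lemma permute_list_update:
  assumes s: "\<sigma> permutes {..<length xs}" and j: "j < length xs"
  shows "permute_list \<sigma> (xs[j := v]) = (permute_list \<sigma> xs)[inv \<sigma> j := v]"
proof (rule nth_equalityI)
  show "length (permute_list \<sigma> (xs[j := v])) = length ((permute_list \<sigma> xs)[inv \<sigma> j := v])" by simp
  fix i assume i: "i < length (permute_list \<sigma> (xs[j := v]))"
  then have i': "i < length xs" by simp
  have si: "\<sigma> i < length xs" using permutes_in_image[OF s] i' by simp
  have eq: "\<sigma> i = j \<longleftrightarrow> i = inv \<sigma> j" using permutes_inv_eq[OF s] by metis
  show "permute_list \<sigma> (xs[j := v]) ! i = (permute_list \<sigma> xs)[inv \<sigma> j := v] ! i"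
    using i' si eq permute_list_nth[of \<sigma> "xs[j:=v]" i] permute_list_nth[OF s i'] s
    by (auto simp: nth_list_update)
qed

lemma inv_perm_less:
  assumes s: "\<sigma> permutes {..<n}" and j: "j < n"
  shows "inv \<sigma> j < n"
  using permutes_in_image[OF permutes_inv[OF s]] j by simp

context LSA
begin

section \<open>Contraction\<close>

definition ictr :: "bool \<Rightarrow> 'g \<Rightarrow> ('g list \<Rightarrow> complex) \<Rightarrow> 'g list \<Rightarrow> complex" where
  "ictr p Z Q = hext G0 G1 (\<lambda>cs ys. psgn (p \<and> psum cs) * Q (Z # ys))"

lemma ictr_hom:
  assumes "multilin scale Q" "homlist G0 G1 cs ys"
  shows "ictr p Z Q ys = psgn (p \<and> psum cs) * Q (Z # ys)"
  unfolding ictr_def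
proof (rule hext_hom[OF assms(2)])
  fix cs' :: "bool list" and ys' :: "'g list" and i assume "length cs' = length ys'" "length ys' = length ys" "i < length ys'" "ys' ! i = 0"
  then have "Q (Z # ys') = 0" using ml_zero[OF assms(1), of "Suc i" "Z # ys'"] by simp
  then show "psgn (p \<and> psum cs') * Q (Z # ys') = 0" by simp
qed

lemma ictr_order:
  assumes "\<And>xs. length xs \<noteq> Suc k \<Longrightarrow> Q xs = 0" "length ys \<noteq> k"
  shows "ictr p Z Q ys = 0"
  using assms unfolding ictr_def hext_def by simp

lemma ictr_Pforms:
  assumes Q: "Q \<in> Pforms scale G0 G1" and Z: "Z \<in> hc p"
  shows "ictr p Z Q \<in> Pforms scale G0 G1"
proof -
  have mQ: "multilin scale Q" using Q by (simp add: Pforms_def)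
  obtain N where N: "\<forall>xs. N < length xs \<longrightarrow> Q xs = 0" using Q by (auto simp: Pforms_def fin_order_def)
  have sQ: "supersym G0 G1 Q" using Q by (simp add: Pforms_def)
  have "multilin scale (ictr p Z Q)"
    unfolding ictr_def
  proof (rule hext_multilin)
    fix ys :: "'g list" and cs :: "bool list" and j c x y
    assume "length cs = length ys" "j < length ys"
    then have "Q ((Z # ys)[Suc j := scale c x + y]) = c * Q ((Z # ys)[Suc j := x]) + Q ((Z # ys)[Suc j := y])"
      using ml_upd[OF mQ, of "Suc j" "Z # ys"] by simp
    then show "psgn (p \<and> psum cs) * Q (Z # ys[j := scale c x + y]) =
       c * (psgn (p \<and> psum cs) * Q (Z # ys[j := x])) + psgn (p \<and> psum cs) * Q (Z # ys[j := y])"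
      by (simp add: algebra_simps)
  qed
  moreover have "fin_order (ictr p Z Q)"
    unfolding fin_order_def ictr_def hext_def using N by (intro exI[of _ N]) auto
  moreover have "supersym G0 G1 (ictr p Z Q)"
    unfolding supersym_def
  proof (intro allI impI)
    fix bs xs \<sigma> assume h: "homlist G0 G1 bs xs" and s: "\<sigma> permutes {..<length xs}"
    have lb: "length bs = length xs" using h by (simp add: homlist_def)
    have h2: "homlist G0 G1 (permute_list \<sigma> bs) (permute_list \<sigma> xs)" by (rule homlist_permute[OF h s])
    have s1: "shiftp 1 \<sigma> permutes {..<length (Z # xs)}"
      using shiftp_permutes[OF s, of 1] by simp
    have "eps (shiftp 1 \<sigma>) (p # bs) * Q (permute_list (shiftp 1 \<sigma>) (Z # xs)) = Q (Z # xs)"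
      using sQ h Z s1 unfolding supersym_def by simp
    moreover have "permute_list (shiftp 1 \<sigma>) (Z # xs) = Z # permute_list \<sigma> xs"
      using permute_list_shiftp[of \<sigma> "Z # xs" 1] s by simp
    moreover have "eps (shiftp 1 \<sigma>) (p # bs) = eps \<sigma> bs"
      using eps_shiftp[of \<sigma> "p # bs" 1] s lb by simp
    ultimately have e: "eps \<sigma> bs * Q (Z # permute_list \<sigma> xs) = Q (Z # xs)" by simp
    show "eps \<sigma> bs * ictr p Z Q (permute_list \<sigma> xs) = ictr p Z Q xs"
      using ictr_hom[OF mQ h2] ictr_hom[OF mQ h] psum_permute[of \<sigma> bs] s lb e
      by (simp add: algebra_simps)
  qed
  ultimately show ?thesis by (simp add: Pforms_def)
qed

lemma ictr_basis:
  assumes Q: "Q \<in> Pforms scale G0 G1" and Z: "Z \<in> hc p"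
  shows "(\<lambda>xs. \<Sum>i\<in>Ix. coord i Z * ictr (fst i) (snd i) Q xs) = ictr p Z Q"
proof (rule ml_eq_on_hom)
  have mQ: "multilin scale Q" using Q by (simp add: Pforms_def)
  show "multilin scale (\<lambda>xs. \<Sum>i\<in>Ix. coord i Z * ictr (fst i) (snd i) Q xs)"
    using Pforms_sum[of Ix "\<lambda>i. ictr (fst i) (snd i) Q" "\<lambda>i. coord i Z"] ictr_Pforms[OF Q] Ix_hc
    by (simp add: Pforms_def)
  show "multilin scale (ictr p Z Q)" using ictr_Pforms[OF Q Z] by (simp add: Pforms_def)
  fix cs ys assume h: "homlist G0 G1 cs ys"
  have "(\<Sum>i\<in>Ix. coord i Z * ictr (fst i) (snd i) Q ys)
      = (\<Sum>i\<in>Ix. psgn (p \<and> psum cs) * (coord i Z * Q (snd i # ys)))"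
  proof (rule sum.cong[OF refl])
    fix i assume "i \<in> Ix"
    show "coord i Z * ictr (fst i) (snd i) Q ys = psgn (p \<and> psum cs) * (coord i Z * Q (snd i # ys))"
    proof (cases "fst i = p")
      case True then show ?thesis using ictr_hom[OF mQ h] by simp
    next
      case False then show ?thesis using coord_hom0[OF Z] by simp
    qed
  qed
  also have "\<dots> = psgn (p \<and> psum cs) * (\<Sum>i\<in>Ix. coord i Z * Q ((Z # ys)[0 := snd i]))"
    by (simp add: sum_distrib_left)
  also have "(\<Sum>i\<in>Ix. coord i Z * Q ((Z # ys)[0 := snd i])) = Q ((Z # ys)[0 := (\<Sum>i\<in>Ix. scale (coord i Z) (snd i))])"
    by (rule ml_sum[OF mQ, symmetric]) simp
  also have "\<dots> = Q (Z # ys)" by (simp add: coord_sum)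
  finally show "(\<Sum>i\<in>Ix. coord i Z * ictr (fst i) (snd i) Q ys) = ictr p Z Q ys"
    using ictr_hom[OF mQ h] by simp
qed

section \<open>Products\<close>

definition PS :: "((nat \<Rightarrow> nat) \<Rightarrow> complex) \<Rightarrow> ('g list \<Rightarrow> complex) \<Rightarrow> ('g list \<Rightarrow> complex) \<Rightarrow> bool list \<Rightarrow> 'g list \<Rightarrow> complex" where
  "PS w F G bs xs = (\<Sum>a\<le>length xs.
      (1 / of_nat (fact a * fact (length xs - a))) *
      (\<Sum>\<sigma> \<in> {\<sigma>. \<sigma> permutes {..<length xs}}.
         w \<sigma> * eps \<sigma> bs * boxh a F G (permute_list \<sigma> bs) (permute_list \<sigma> xs)))"

lemma sprod_eq: "sprod G0 G1 F G = hext G0 G1 (PS (\<lambda>_. 1) F G)"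
  unfolding sprod_def by (rule arg_cong[where f="hext G0 G1"]) (simp add: PS_def fun_eq_iff)

lemma wprod_eq: "wprod G0 G1 F G = hext G0 G1 (PS (\<lambda>\<sigma>. of_int (sign \<sigma>)) F G)"
  unfolding wprod_def by (rule arg_cong[where f="hext G0 G1"]) (simp add: PS_def fun_eq_iff)

lemma boxh_zero:
  assumes mF: "multilin scale F" and mG: "multilin scale G"
    and m: "m < length zs" "zs ! m = 0"
  shows "boxh a F G cs zs = 0"
proof (cases "m < a")
  case True
  have "F (take a zs) = 0" using ml_zero[OF mF, of m "take a zs"] True m by simp
  then show ?thesis by (simp add: boxh_def)
next
  case False
  have "G (drop a zs) = 0" using ml_zero[OF mG, of "m - a" "drop a zs"] False m by simp
  then show ?thesis by (simp add: boxh_def)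
qed

lemma PS_zero:
  assumes mF: "multilin scale F" and mG: "multilin scale G"
    and l: "length cs = length ys" and i: "i < length ys" "ys ! i = 0"
  shows "PS w F G cs ys = 0"
  unfolding PS_def
proof (intro sum.neutral ballI)
  fix a assume "a \<in> {..length ys}"
  have "(\<Sum>\<sigma> \<in> {\<sigma>. \<sigma> permutes {..<length ys}}.
         w \<sigma> * eps \<sigma> cs * boxh a F G (permute_list \<sigma> cs) (permute_list \<sigma> ys)) = 0"
  proof (intro sum.neutral ballI)
    fix \<sigma> assume "\<sigma> \<in> {\<sigma>. \<sigma> permutes {..<length ys}}"
    then have s: "\<sigma> permutes {..<length ys}" by simp
    have m: "inv \<sigma> i < length ys" by (rule inv_perm_less[OF s i(1)])
    have "permute_list \<sigma> ys ! inv \<sigma> i = 0"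
      using permute_list_nth[OF s m] i permutes_inverses(1)[OF s] by simp
    then have "boxh a F G (permute_list \<sigma> cs) (permute_list \<sigma> ys) = 0"
      using boxh_zero[OF mF mG, of "inv \<sigma> i" "permute_list \<sigma> ys"] m by simp
    then show "w \<sigma> * eps \<sigma> cs * boxh a F G (permute_list \<sigma> cs) (permute_list \<sigma> ys) = 0" by simp
  qed
  then show "1 / of_nat (fact a * fact (length ys - a)) * (\<Sum>\<sigma> \<in> {\<sigma>. \<sigma> permutes {..<length ys}}.
         w \<sigma> * eps \<sigma> cs * boxh a F G (permute_list \<sigma> cs) (permute_list \<sigma> ys)) = 0" by simp
qed

lemma PS_hom:
  assumes mF: "multilin scale F" and mG: "multilin scale G" and h: "homlist G0 G1 bs xs"
  shows "hext G0 G1 (PS w F G) xs = PS w F G bs xs"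
  by (rule hext_hom[OF h]) (rule PS_zero[OF mF mG], auto)

lemma boxh_upd:
  assumes mF: "multilin scale F" and mG: "multilin scale G" and m: "m < length zs"
  shows "boxh a F G cs (zs[m := scale c x + y]) = c * boxh a F G cs (zs[m := x]) + boxh a F G cs (zs[m := y])"
proof (cases "m < a")
  case True
  have "F (take a (zs[m := scale c x + y])) = c * F (take a (zs[m := x])) + F (take a (zs[m := y]))"
    using ml_upd[OF mF, of m "take a zs" c x y] True m by (simp add: take_update_swap)
  moreover have "drop a (zs[m := v]) = drop a zs" for v using True by simp
  ultimately show ?thesis by (simp add: boxh_def algebra_simps)
next
  case False
  have "G (drop a (zs[m := scale c x + y])) = c * G (drop a (zs[m := x])) + G (drop a (zs[m := y]))"
    using ml_upd[OF mG, of "m - a" "drop a zs" c x y] False m by (simp add: drop_update_swap)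
  moreover have "take a (zs[m := v]) = take a zs" for v using False by simp
  ultimately show ?thesis by (simp add: boxh_def algebra_simps)
qed

lemma PS_upd:
  assumes mF: "multilin scale F" and mG: "multilin scale G"
    and j: "j < length ys"
  shows "PS w F G cs (ys[j := scale c x + y]) = c * PS w F G cs (ys[j := x]) + PS w F G cs (ys[j := y])"
proof -
  have t: "w \<sigma> * eps \<sigma> cs * boxh a F G (permute_list \<sigma> cs) (permute_list \<sigma> (ys[j := scale c x + y]))
     = c * (w \<sigma> * eps \<sigma> cs * boxh a F G (permute_list \<sigma> cs) (permute_list \<sigma> (ys[j := x])))
       + w \<sigma> * eps \<sigma> cs * boxh a F G (permute_list \<sigma> cs) (permute_list \<sigma> (ys[j := y]))"
    if s: "\<sigma> permutes {..<length ys}" for \<sigma> a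
  proof -
    have m: "inv \<sigma> j < length (permute_list \<sigma> ys)" using inv_perm_less[OF s j] by simp
    have e: "permute_list \<sigma> (ys[j := v]) = (permute_list \<sigma> ys)[inv \<sigma> j := v]" for v
      by (rule permute_list_update[OF s j])
    show ?thesis unfolding e using boxh_upd[OF mF mG m, of a "permute_list \<sigma> cs" c x y] by (simp add: algebra_simps)
  qed
  have inner: "(\<Sum>\<sigma> \<in> {\<sigma>. \<sigma> permutes {..<length ys}}. w \<sigma> * eps \<sigma> cs * boxh a F G (permute_list \<sigma> cs) (permute_list \<sigma> (ys[j := scale c x + y])))
     = c * (\<Sum>\<sigma> \<in> {\<sigma>. \<sigma> permutes {..<length ys}}. w \<sigma> * eps \<sigma> cs * boxh a F G (permute_list \<sigma> cs) (permute_list \<sigma> (ys[j := x])))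
       + (\<Sum>\<sigma> \<in> {\<sigma>. \<sigma> permutes {..<length ys}}. w \<sigma> * eps \<sigma> cs * boxh a F G (permute_list \<sigma> cs) (permute_list \<sigma> (ys[j := y])))" for a
  proof -
    have "(\<Sum>\<sigma> \<in> {\<sigma>. \<sigma> permutes {..<length ys}}. w \<sigma> * eps \<sigma> cs * boxh a F G (permute_list \<sigma> cs) (permute_list \<sigma> (ys[j := scale c x + y])))
      = (\<Sum>\<sigma> \<in> {\<sigma>. \<sigma> permutes {..<length ys}}. c * (w \<sigma> * eps \<sigma> cs * boxh a F G (permute_list \<sigma> cs) (permute_list \<sigma> (ys[j := x])))
       + w \<sigma> * eps \<sigma> cs * boxh a F G (permute_list \<sigma> cs) (permute_list \<sigma> (ys[j := y])))"
      by (rule sum.cong[OF refl], rule t) simp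
    then show ?thesis by (simp add: sum.distrib sum_distrib_left)
  qed
  show ?thesis
    unfolding PS_def length_list_update inner
    by (simp add: sum.distrib sum_distrib_left algebra_simps)
qed

lemma PS_ml: "multilin scale F \<Longrightarrow> multilin scale G \<Longrightarrow> multilin scale (hext G0 G1 (PS w F G))"
  by (rule hext_multilin) (rule PS_upd)

lemma PS_fin:
  assumes N1: "\<forall>xs. N1 < length xs \<longrightarrow> F xs = 0" and N2: "\<forall>xs. N2 < length xs \<longrightarrow> G xs = 0"
    and l: "N1 + N2 < length ys"
  shows "PS w F G cs ys = 0"
  unfolding PS_def
proof (intro sum.neutral ballI)
  fix a assume a: "a \<in> {..length ys}"
  have "boxh a F G cs' zs = 0" if "length zs = length ys" for cs' zs
  proof (cases "N1 < a")
    case True then show ?thesis using N1 a that by (simp add: boxh_def)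
  next
    case False then show ?thesis using N2 a that l by (simp add: boxh_def)
  qed
  then show "1 / of_nat (fact a * fact (length ys - a)) * (\<Sum>\<sigma> \<in> {\<sigma>. \<sigma> permutes {..<length ys}}.
         w \<sigma> * eps \<sigma> cs * boxh a F G (permute_list \<sigma> cs) (permute_list \<sigma> ys)) = 0" by simp
qed

lemma sprod_Pforms:
  assumes F: "F \<in> Pforms scale G0 G1" and G: "G \<in> Pforms scale G0 G1"
  shows "sprod G0 G1 F G \<in> Pforms scale G0 G1"
proof -
  have mF: "multilin scale F" and mG: "multilin scale G" using F G by (auto simp: Pforms_def)
  obtain N1 where N1: "\<forall>xs. N1 < length xs \<longrightarrow> F xs = 0" using F by (auto simp: Pforms_def fin_order_def)
  obtain N2 where N2: "\<forall>xs. N2 < length xs \<longrightarrow> G xs = 0" using G by (auto simp: Pforms_def fin_order_def)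
  have "multilin scale (sprod G0 G1 F G)" unfolding sprod_eq by (rule PS_ml[OF mF mG])
  moreover have "fin_order (sprod G0 G1 F G)"
    unfolding fin_order_def sprod_eq hext_def
    using PS_fin[OF N1 N2] by (intro exI[of _ "N1 + N2"]) auto
  moreover have "supersym G0 G1 (sprod G0 G1 F G)"
    unfolding supersym_def
  proof (intro allI impI)
    fix bs xs \<tau> assume h: "homlist G0 G1 bs xs" and t: "\<tau> permutes {..<length xs}"
    have lb: "length bs = length xs" using h by (simp add: homlist_def)
    have h2: "homlist G0 G1 (permute_list \<tau> bs) (permute_list \<tau> xs)" by (rule homlist_permute[OF h t])
    have inner: "eps \<tau> bs * (\<Sum>\<sigma> \<in> {\<sigma>. \<sigma> permutes {..<length xs}}. 1 * eps \<sigma> (permute_list \<tau> bs) *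
              boxh a F G (permute_list \<sigma> (permute_list \<tau> bs)) (permute_list \<sigma> (permute_list \<tau> xs)))
          = (\<Sum>\<sigma> \<in> {\<sigma>. \<sigma> permutes {..<length xs}}. 1 * eps \<sigma> bs *
              boxh a F G (permute_list \<sigma> bs) (permute_list \<sigma> xs))" for a
    proof -
      have "eps \<tau> bs * (\<Sum>\<sigma> \<in> {\<sigma>. \<sigma> permutes {..<length xs}}. 1 * eps \<sigma> (permute_list \<tau> bs) *
              boxh a F G (permute_list \<sigma> (permute_list \<tau> bs)) (permute_list \<sigma> (permute_list \<tau> xs)))
          = (\<Sum>\<sigma> \<in> {\<sigma>. \<sigma> permutes {..<length xs}}. eps (\<tau> \<circ> \<sigma>) bs *
              boxh a F G (permute_list (\<tau> \<circ> \<sigma>) bs) (permute_list (\<tau> \<circ> \<sigma>) xs))"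
        unfolding sum_distrib_left
      proof (rule sum.cong[OF refl])
        fix \<sigma> assume "\<sigma> \<in> {\<sigma>. \<sigma> permutes {..<length xs}}"
        then have s: "\<sigma> permutes {..<length xs}" by simp
        show "eps \<tau> bs * (1 * eps \<sigma> (permute_list \<tau> bs) *
              boxh a F G (permute_list \<sigma> (permute_list \<tau> bs)) (permute_list \<sigma> (permute_list \<tau> xs)))
            = eps (\<tau> \<circ> \<sigma>) bs * boxh a F G (permute_list (\<tau> \<circ> \<sigma>) bs) (permute_list (\<tau> \<circ> \<sigma>) xs)"
          using eps_cocycle[of \<tau> bs \<sigma>] t s lb permute_list_compose[of \<sigma> bs \<tau>] permute_list_compose[of \<sigma> xs \<tau>]
          by simp
      qed
      also have "\<dots> = (\<Sum>\<sigma> \<in> {\<sigma>. \<sigma> permutes {..<length xs}}. eps \<sigma> bs *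
              boxh a F G (permute_list \<sigma> bs) (permute_list \<sigma> xs))"
        by (rule setum_permutations_compose_left[OF t, of "\<lambda>\<sigma>. eps \<sigma> bs * boxh a F G (permute_list \<sigma> bs) (permute_list \<sigma> xs)", symmetric])
      finally show ?thesis by simp
    qed
    have "eps \<tau> bs * PS (\<lambda>_. 1) F G (permute_list \<tau> bs) (permute_list \<tau> xs)
        = (\<Sum>a\<le>length xs. 1 / of_nat (fact a * fact (length xs - a)) *
            (eps \<tau> bs * (\<Sum>\<sigma> \<in> {\<sigma>. \<sigma> permutes {..<length xs}}. 1 * eps \<sigma> (permute_list \<tau> bs) *
              boxh a F G (permute_list \<sigma> (permute_list \<tau> bs)) (permute_list \<sigma> (permute_list \<tau> xs)))))"
      unfolding PS_def length_permute_list by (subst sum_distrib_left) (simp only: mult_ac)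
    also have "\<dots> = PS (\<lambda>_. 1) F G bs xs"
      unfolding PS_def inner ..
    finally have "eps \<tau> bs * PS (\<lambda>_. 1) F G (permute_list \<tau> bs) (permute_list \<tau> xs) = PS (\<lambda>_. 1) F G bs xs" .
    then show "eps \<tau> bs * sprod G0 G1 F G (permute_list \<tau> xs) = sprod G0 G1 F G xs"
      unfolding sprod_eq PS_hom[OF mF mG h] PS_hom[OF mF mG h2] .
  qed
  ultimately show ?thesis by (simp add: Pforms_def)
qed

end

lemma sum_single_nat:
  fixes n :: nat
  assumes "m \<le> n" "\<And>a. a \<le> n \<Longrightarrow> a \<noteq> m \<Longrightarrow> f a = 0"
  shows "(\<Sum>a\<le>n. f a) = f m"
proof -
  have "(\<Sum>a\<le>n. f a) = (\<Sum>a\<in>{m}. f a)"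
    using assms by (intro sum.mono_neutral_right) auto
  then show ?thesis by simp
qed

lemma card_perms: "card {\<sigma>. \<sigma> permutes {..<n}} = fact n"
  using card_permutations[of "{..<n}" n] by simp

lemma finite_perms: "finite {\<sigma>. \<sigma> permutes {..<(n::nat)}}"
  using finite_permutations[of "{..<n}"] by simp

context LSA
begin

lemma PS_single:
  assumes "\<And>zs. length zs \<noteq> m \<Longrightarrow> F zs = 0"
  shows "PS w F G bs xs = (if m \<le> length xs then 1 / of_nat (fact m * fact (length xs - m)) *
      (\<Sum>\<sigma> \<in> {\<sigma>. \<sigma> permutes {..<length xs}}. w \<sigma> * eps \<sigma> bs * boxh m F G (permute_list \<sigma> bs) (permute_list \<sigma> xs)) else 0)"
proof -
  have z: "boxh a F G cs zs = 0" if "a \<le> length zs" "a \<noteq> m" for a cs zs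
    using assms[of "take a zs"] that by (simp add: boxh_def)
  show ?thesis
  proof (cases "m \<le> length xs")
    case True
    show ?thesis unfolding PS_def using True
      by (subst sum_single_nat[of m]) (auto simp: z)
  next
    case False
    have zz: "boxh a F G (permute_list \<sigma> bs) (permute_list \<sigma> xs) = 0" if "a \<le> length xs" for a \<sigma>
      using z[of a "permute_list \<sigma> xs"] that False by simp
    show ?thesis unfolding PS_def using False by (simp add: zz)
  qed
qed

lemma euler_boxh:
  assumes Q: "Q \<in> Pforms scale G0 G1" and h: "homlist G0 G1 cs ys" and l: "ys \<noteq> []"
  shows "(\<Sum>i\<in>Ix. boxh 1 (phi i) (ictr (fst i) (snd i) Q) cs ys) = Q ys"
proof -
  have mQ: "multilin scale Q" using Q by (simp add: Pforms_def)
  obtain y0 ys' where ys: "ys = y0 # ys'" using l by (cases ys) auto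
  have lc: "length cs = length ys" using h by (simp add: homlist_def)
  then obtain c0 cs' where cs: "cs = c0 # cs'" using ys by (cases cs) auto
  have y0: "y0 \<in> hc c0" and h': "homlist G0 G1 cs' ys'" using h ys cs by auto
  have "(\<Sum>i\<in>Ix. boxh 1 (phi i) (ictr (fst i) (snd i) Q) cs ys)
      = (\<Sum>i\<in>Ix. coord i y0 * Q ((y0 # ys')[0 := snd i]))"
  proof (rule sum.cong[OF refl])
    fix i assume "i \<in> Ix"
    show "boxh 1 (phi i) (ictr (fst i) (snd i) Q) cs ys = coord i y0 * Q ((y0 # ys')[0 := snd i])"
    proof (cases "fst i = c0")
      case True
      then show ?thesis
        using ictr_hom[OF mQ h', of "fst i" "snd i"]
        by (simp add: boxh_def ys cs phi_def conj_commute)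
    next
      case False
      then show ?thesis using coord_hom0[OF y0 False] by (simp add: boxh_def ys cs phi_def)
    qed
  qed
  also have "\<dots> = Q ((y0 # ys')[0 := (\<Sum>i\<in>Ix. scale (coord i y0) (snd i))])"
    by (rule ml_sum[OF mQ, symmetric]) simp
  also have "\<dots> = Q ys" by (simp add: coord_sum ys)
  finally show ?thesis .
qed

lemma euler:
  assumes Q: "Q \<in> Pforms scale G0 G1" and ord: "\<And>xs. length xs \<noteq> k \<Longrightarrow> Q xs = 0" and k: "1 \<le> k"
  shows "Q = (\<lambda>xs. \<Sum>i\<in>Ix. (1 / of_nat k) * sprod G0 G1 (phi i) (ictr (fst i) (snd i) Q) xs)"
proof (rule ml_eq_on_hom)
  have mQ: "multilin scale Q" using Q by (simp add: Pforms_def)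
  then show "multilin scale Q" .
  have PI: "\<And>i. i \<in> Ix \<Longrightarrow> sprod G0 G1 (phi i) (ictr (fst i) (snd i) Q) \<in> Pforms scale G0 G1"
    using sprod_Pforms gdual_Pforms[OF phi_gdual] ictr_Pforms[OF Q] Ix_hc by blast
  show "multilin scale (\<lambda>xs. \<Sum>i\<in>Ix. (1 / of_nat k) * sprod G0 G1 (phi i) (ictr (fst i) (snd i) Q) xs)"
    using Pforms_sum[of Ix "\<lambda>i. sprod G0 G1 (phi i) (ictr (fst i) (snd i) Q)" "\<lambda>_. 1 / of_nat k"] PI
    by (simp add: Pforms_def)
  fix bs xs assume h: "homlist G0 G1 bs xs"
  have lb: "length bs = length xs" using h by (simp add: homlist_def)
  let ?n = "length xs"
  let ?S = "{\<sigma>. \<sigma> permutes {..<?n}}"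
  have mphi: "\<And>i. multilin scale (phi i)" using phi_gdual by (simp add: gdual_def)
  have mpsi: "\<And>i. i \<in> Ix \<Longrightarrow> multilin scale (ictr (fst i) (snd i) Q)"
    using ictr_Pforms[OF Q] Ix_hc by (simp add: Pforms_def)
  have phi1: "\<And>i zs. length zs \<noteq> 1 \<Longrightarrow> phi i zs = 0" by (simp add: phi_def)
  show "Q xs = (\<Sum>i\<in>Ix. (1 / of_nat k) * sprod G0 G1 (phi i) (ictr (fst i) (snd i) Q) xs)"
  proof (cases "xs = []")
    case True
    then have "Q xs = 0" using ord k by simp
    moreover have "sprod G0 G1 (phi i) (ictr (fst i) (snd i) Q) xs = 0" if "i \<in> Ix" for i
    proof -
      have "PS (\<lambda>_. 1) (phi i) (ictr (fst i) (snd i) Q) bs xs = 0"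
        using PS_single[of 1 "phi i" "\<lambda>_. 1" "ictr (fst i) (snd i) Q" bs xs] phi1 True by simp
      then show ?thesis unfolding sprod_eq PS_hom[OF mphi mpsi[OF that] h] .
    qed
    ultimately show ?thesis by simp
  next
    case False
    then have n1: "1 \<le> ?n" by (cases xs) auto
    have "(\<Sum>i\<in>Ix. (1 / of_nat k) * sprod G0 G1 (phi i) (ictr (fst i) (snd i) Q) xs)
        = (\<Sum>i\<in>Ix. (1 / of_nat k) * (1 / of_nat (fact (?n - 1))) *
            (\<Sum>\<sigma>\<in>?S. eps \<sigma> bs * boxh 1 (phi i) (ictr (fst i) (snd i) Q) (permute_list \<sigma> bs) (permute_list \<sigma> xs)))"
    proof (rule sum.cong[OF refl])
      fix i assume i: "i \<in> Ix"
      show "(1 / of_nat k) * sprod G0 G1 (phi i) (ictr (fst i) (snd i) Q) xs =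
         (1 / of_nat k) * (1 / of_nat (fact (?n - 1))) *
            (\<Sum>\<sigma>\<in>?S. eps \<sigma> bs * boxh 1 (phi i) (ictr (fst i) (snd i) Q) (permute_list \<sigma> bs) (permute_list \<sigma> xs))"
      proof -
        have "PS (\<lambda>_. 1) (phi i) (ictr (fst i) (snd i) Q) bs xs = 1 / of_nat (fact 1 * fact (?n - 1)) *
            (\<Sum>\<sigma>\<in>?S. 1 * eps \<sigma> bs * boxh 1 (phi i) (ictr (fst i) (snd i) Q) (permute_list \<sigma> bs) (permute_list \<sigma> xs))"
          using PS_single[of 1 "phi i" "\<lambda>_. 1" "ictr (fst i) (snd i) Q" bs xs] phi1 n1 by simp
        then show ?thesis unfolding sprod_eq PS_hom[OF mphi mpsi[OF i] h] by simp
      qed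
    qed
    also have "\<dots> = (1 / of_nat k) * (1 / of_nat (fact (?n - 1))) *
            (\<Sum>\<sigma>\<in>?S. eps \<sigma> bs * (\<Sum>i\<in>Ix. boxh 1 (phi i) (ictr (fst i) (snd i) Q) (permute_list \<sigma> bs) (permute_list \<sigma> xs)))"
      by (simp add: sum_distrib_left sum.swap[of _ Ix] mult.assoc)
    also have "\<dots> = (1 / of_nat k) * (1 / of_nat (fact (?n - 1))) * (\<Sum>\<sigma>\<in>?S. Q xs)"
    proof -
      have "eps \<sigma> bs * (\<Sum>i\<in>Ix. boxh 1 (phi i) (ictr (fst i) (snd i) Q) (permute_list \<sigma> bs) (permute_list \<sigma> xs)) = Q xs"
        if s: "\<sigma> \<in> ?S" for \<sigma>
      proof -
        have s': "\<sigma> permutes {..<?n}" using s by simp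
        have h2: "homlist G0 G1 (permute_list \<sigma> bs) (permute_list \<sigma> xs)" by (rule homlist_permute[OF h s'])
        have ne: "permute_list \<sigma> xs \<noteq> []" using False by (metis length_0_conv length_permute_list)
        have "eps \<sigma> bs * Q (permute_list \<sigma> xs) = Q xs"
          using Q h s' by (simp add: Pforms_def supersym_def)
        then show ?thesis using euler_boxh[OF Q h2 ne] by simp
      qed
      then show ?thesis by (intro arg_cong[where f="\<lambda>x. (1 / of_nat k) * (1 / of_nat (fact (?n - 1))) * x"] sum.cong) auto
    qed
    also have "\<dots> = (1 / of_nat k) * (1 / of_nat (fact (?n - 1))) * (fact ?n * Q xs)"
      by (simp add: card_perms)
    also have "\<dots> = (of_nat ?n / of_nat k) * Q xs"
    proof -
      have fr: "(fact ?n :: complex) = of_nat ?n * fact (?n - 1)" using False by (intro fact_reduce) simp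
      show ?thesis unfolding fr by (simp add: field_simps)
    qed
    also have "\<dots> = Q xs"
      using ord[of xs] k by (cases "?n = k") auto
    finally show ?thesis ..
  qed
qed

section \<open>The differential of a linear form\<close>

lemma dform_Phi:
  assumes g: "\<phi> \<in> gdual scale" and l: "length cs = length ys"
  shows "(\<Sum>(i, j) \<in> {(i, j). i < j \<and> j < length ys}.
        (-1) ^ (i + j) * psgn (cs ! i \<and> psum (take i cs)) *
        psgn (cs ! j \<and> (psum (take j cs) \<noteq> cs ! i)) *
        \<phi> (br (ys ! i) (ys ! j) # [ys ! l. l \<leftarrow> [0..<length ys], l \<noteq> i, l \<noteq> j]))
     = (if length ys = 2 then - \<phi> [br (ys ! 0) (ys ! 1)] else 0)"
proof (cases "length ys = 2")
  case True
  have "{(i, j). i < j \<and> j < length ys} = {(0::nat, 1::nat)}" using True by auto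
  moreover obtain c0 c1 where "cs = [c0, c1]" using l True
    by (metis (no_types, lifting) One_nat_def Suc_1 length_0_conv length_Suc_conv)
  moreover have "[0..<2] = [0::nat, 1]" by (simp add: upt_rec)
  ultimately show ?thesis using True by simp
next
  case False
  have z: "\<phi> zs = 0" if "length zs \<noteq> 1" for zs using g that by (simp add: gdual_def)
  have "\<phi> (br (ys ! i) (ys ! j) # [ys ! l. l \<leftarrow> [0..<length ys], l \<noteq> i, l \<noteq> j]) = 0"
    if ij: "i < j" "j < length ys" for i j
  proof -
    have n3: "3 \<le> length ys" using ij False by linarith
    define l where "l = (if i = 0 then (if j = 1 then 2 else 1) else (0::nat))"
    have l: "l < length ys" "l \<noteq> i" "l \<noteq> j" using ij n3 by (auto simp: l_def)
    have "ys ! l \<in> set [ys ! l. l \<leftarrow> [0..<length ys], l \<noteq> i, l \<noteq> j]"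
      using l by auto
    then have "[ys ! l. l \<leftarrow> [0..<length ys], l \<noteq> i, l \<noteq> j] \<noteq> []" by auto
    then show ?thesis by (intro z) simp
  qed
  then show ?thesis using False by (auto intro!: sum.neutral)
qed

lemma dform_eq:
  assumes g: "\<phi> \<in> gdual scale"
  shows "dform G0 G1 br \<phi> ys = hext G0 G1 (\<lambda>cs ys. if length ys = 2 then - \<phi> [br (ys ! 0) (ys ! 1)] else 0) ys"
  unfolding dform_def by (rule hext_cong) (rule dform_Phi[OF g])

lemma dform_hom:
  assumes g: "\<phi> \<in> gdual scale" and h: "homlist G0 G1 cs ys"
  shows "dform G0 G1 br \<phi> ys = (if length ys = 2 then - \<phi> [br (ys ! 0) (ys ! 1)] else 0)"
  unfolding dform_eq[OF g]
proof (rule hext_hom[OF h])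
  have m: "multilin scale \<phi>" using g by (simp add: gdual_def)
  fix cs' :: "bool list" and ys' :: "'g list" and i
  assume a: "length cs' = length ys'" "length ys' = length ys" "i < length ys'" "ys' ! i = 0"
  show "(if length ys' = 2 then - \<phi> [br (ys' ! 0) (ys' ! 1)] else 0) = 0"
  proof (cases "length ys' = 2")
    case True
    then have "br (ys' ! 0) (ys' ! 1) = 0" using a by (cases i) auto
    then show ?thesis using ml_zero[OF m, of 0 "[0]"] True by simp
  qed simp
qed

lemma dform_order:
  assumes "\<phi> \<in> gdual scale" "length ys \<noteq> 2"
  shows "dform G0 G1 br \<phi> ys = 0"
  unfolding dform_eq[OF assms(1)] hext_def using assms(2) by simp

end

lemma Alt_double:
  assumes lb: "length bs = n" and lx: "length xs = n" and n2: "2 \<le> n"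
  shows "(\<Sum>\<sigma>\<in>{\<sigma>. \<sigma> permutes {..<n}}. of_int (sign \<sigma>) * eps \<sigma> bs *
      (\<Sum>\<tau>\<in>{\<tau>. \<tau> permutes {..<n - 2}}. of_int (sign \<tau>) * eps \<tau> (drop 2 (permute_list \<sigma> bs)) *
          H (take 2 (permute_list \<sigma> bs) @ permute_list \<tau> (drop 2 (permute_list \<sigma> bs)))
            (take 2 (permute_list \<sigma> xs) @ permute_list \<tau> (drop 2 (permute_list \<sigma> xs)))))
    = of_nat (fact (n - 2)) * Alt n H bs xs"
proof -
  let ?S = "{\<sigma>. \<sigma> permutes {..<n}}" and ?T = "{\<tau>. \<tau> permutes {..<n - 2}}"
  define f where "f \<rho> = of_int (sign \<rho>) * eps \<rho> bs * H (permute_list \<rho> bs) (permute_list \<rho> xs)" for \<rho>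
  have pt: "shiftp 2 \<tau> permutes {..<n}" if "\<tau> \<in> ?T" for \<tau>
  proof -
    from that have "\<tau> permutes {..<n - 2}" by simp
    from shiftp_permutes[OF this, of 2] show ?thesis unfolding le_add_diff_inverse[OF n2] .
  qed
  have eq: "of_int (sign \<sigma>) * eps \<sigma> bs *
      (of_int (sign \<tau>) * eps \<tau> (drop 2 (permute_list \<sigma> bs)) *
          H (take 2 (permute_list \<sigma> bs) @ permute_list \<tau> (drop 2 (permute_list \<sigma> bs)))
            (take 2 (permute_list \<sigma> xs) @ permute_list \<tau> (drop 2 (permute_list \<sigma> xs))))
     = f (\<sigma> \<circ> shiftp 2 \<tau>)" if s: "\<sigma> \<in> ?S" and t: "\<tau> \<in> ?T" for \<sigma> \<tau>
  proof -
    have s': "\<sigma> permutes {..<n}" and t': "\<tau> permutes {..<n - 2}" using s t by auto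
    have ps: "shiftp 2 \<tau> permutes {..<n}" using pt[OF t] .
    have sgn: "sign (\<sigma> \<circ> shiftp 2 \<tau>) = sign \<sigma> * sign \<tau>"
      using sign_compose[OF perm_of[OF s'] perm_of[OF ps]] sign_shiftp[OF t'] by simp
    have e: "eps (\<sigma> \<circ> shiftp 2 \<tau>) bs = eps \<sigma> bs * eps \<tau> (drop 2 (permute_list \<sigma> bs))"
    proof -
      have "eps (\<sigma> \<circ> shiftp 2 \<tau>) bs = eps \<sigma> bs * eps (shiftp 2 \<tau>) (permute_list \<sigma> bs)"
        using eps_cocycle[of \<sigma> bs "shiftp 2 \<tau>"] s' ps lb by simp
      also have "eps (shiftp 2 \<tau>) (permute_list \<sigma> bs) = eps \<tau> (drop 2 (permute_list \<sigma> bs))"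
        using eps_shiftp[of \<tau> "permute_list \<sigma> bs" 2] t' lb n2 by simp
      finally show ?thesis .
    qed
    have pb: "permute_list (\<sigma> \<circ> shiftp 2 \<tau>) bs = take 2 (permute_list \<sigma> bs) @ permute_list \<tau> (drop 2 (permute_list \<sigma> bs))"
      using permute_list_compose[of "shiftp 2 \<tau>" bs \<sigma>] ps lb
        permute_list_shiftp[of \<tau> "permute_list \<sigma> bs" 2] t' n2 by simp
    have px: "permute_list (\<sigma> \<circ> shiftp 2 \<tau>) xs = take 2 (permute_list \<sigma> xs) @ permute_list \<tau> (drop 2 (permute_list \<sigma> xs))"
      using permute_list_compose[of "shiftp 2 \<tau>" xs \<sigma>] ps lx
        permute_list_shiftp[of \<tau> "permute_list \<sigma> xs" 2] t' n2 by simp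
    show ?thesis unfolding f_def sgn e pb px by (simp add: algebra_simps)
  qed
  have "(\<Sum>\<sigma>\<in>?S. of_int (sign \<sigma>) * eps \<sigma> bs *
      (\<Sum>\<tau>\<in>?T. of_int (sign \<tau>) * eps \<tau> (drop 2 (permute_list \<sigma> bs)) *
          H (take 2 (permute_list \<sigma> bs) @ permute_list \<tau> (drop 2 (permute_list \<sigma> bs)))
            (take 2 (permute_list \<sigma> xs) @ permute_list \<tau> (drop 2 (permute_list \<sigma> xs)))))
    = (\<Sum>\<sigma>\<in>?S. \<Sum>\<tau>\<in>?T. f (\<sigma> \<circ> shiftp 2 \<tau>))"
    unfolding sum_distrib_left by (intro sum.cong refl eq) auto
  also have "\<dots> = (\<Sum>\<tau>\<in>?T. \<Sum>\<sigma>\<in>?S. f (\<sigma> \<circ> shiftp 2 \<tau>))" by (rule sum.swap)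
  also have "\<dots> = (\<Sum>\<tau>\<in>?T. \<Sum>\<rho>\<in>?S. f \<rho>)"
    by (intro sum.cong refl sum_permutations_compose_right[symmetric] pt)
  also have "\<dots> = of_nat (fact (n - 2)) * Alt n H bs xs"
    by (simp add: card_perms Alt_def f_def)
  finally show ?thesis .
qed

lemma take2: "2 \<le> length xs \<Longrightarrow> take 2 xs = [xs ! 0, xs ! 1]"
proof -
  assume "2 \<le> length xs"
  then obtain a b r where "xs = a # b # r"
    by (metis One_nat_def Suc_1 Suc_le_length_iff)
  then show ?thesis by (simp add: numeral_2_eq_2)
qed

fun pairb :: "('g \<Rightarrow> 'g \<Rightarrow> 'g) \<Rightarrow> 'g list \<Rightarrow> 'g list" where
  "pairb f (a # b # r) = f a b # pairb f r"
| "pairb f _ = []"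

fun pairp :: "bool list \<Rightarrow> bool list" where
  "pairp (a # b # r) = (a \<noteq> b) # pairp r"
| "pairp _ = []"

lemma pairp_psum: "even (length cs) \<Longrightarrow> psum (pairp cs) = psum cs"
  by (induction cs rule: pairp.induct) auto

lemma pairb_append: "even (length xs) \<Longrightarrow> pairb f (xs @ ys) = pairb f xs @ pairb f ys"
  by (induction f xs rule: pairb.induct) auto

lemma length_pairb: "length (pairb f xs) = length xs div 2"
  by (induction f xs rule: pairb.induct) auto

lemma length_pairp: "length (pairp xs) = length xs div 2"
  by (induction xs rule: pairp.induct) auto

definition cT :: "nat \<Rightarrow> complex" where "cT k = (-1) ^ k / (2 ^ k * fact k)"

context LSA
begin

lemma homlist_pair_gen:
  assumes f: "\<And>x y p q. x \<in> hc p \<Longrightarrow> y \<in> hc q \<Longrightarrow> f x y \<in> hc (p \<noteq> q)"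
  shows "homlist G0 G1 cs ys \<Longrightarrow> homlist G0 G1 (pairp cs) (pairb f ys)"
proof (induction ys arbitrary: cs rule: induct_list012)
  case (3 a b r)
  then obtain c0 c1 cs' where "cs = c0 # c1 # cs'"
    by (metis homlist_length length_Suc_conv)
  then show ?case using 3 f by auto
next
  case 1
  then show ?case by (cases cs) (auto simp: homlist_def)
next
  case (2 v)
  then show ?case by (cases cs) (auto simp: homlist_def)
qed

lemma homlist_pair:
  "homlist G0 G1 cs ys \<Longrightarrow> homlist G0 G1 (pairp cs) (pairb br ys)"
  by (rule homlist_pair_gen[OF brhom])

end

context LSS
begin

lemma s_phi: "s (phi i) = dform G0 G1 br (phi i)"
  by (rule s_gdual[OF phi_gdual])

lemma dphi_ml: "multilin scale (dform G0 G1 br (phi i))"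
  using s_ml[OF gdual_Pforms[OF phi_gdual]] s_phi by simp

lemma wprod_dphi_hom:
  assumes m: "multilin scale \<omega>" and h: "homlist G0 G1 bs xs"
  shows "wprod G0 G1 (dform G0 G1 br (phi i)) \<omega> xs = (if 2 \<le> length xs then 1 / of_nat (fact 2 * fact (length xs - 2)) *
      (\<Sum>\<sigma> \<in> {\<sigma>. \<sigma> permutes {..<length xs}}. of_int (sign \<sigma>) * eps \<sigma> bs *
         boxh 2 (dform G0 G1 br (phi i)) \<omega> (permute_list \<sigma> bs) (permute_list \<sigma> xs)) else 0)"
proof -
  have z: "\<And>zs. length zs \<noteq> 2 \<Longrightarrow> dform G0 G1 br (phi i) zs = 0"
    by (rule dform_order[OF phi_gdual])
  show ?thesis
    unfolding wprod_eq PS_hom[OF dphi_ml m h]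
    using PS_single[of 2 "dform G0 G1 br (phi i)" "\<lambda>\<sigma>. of_int (sign \<sigma>)" \<omega> bs xs] z by simp
qed

lemma boxsum:
  assumes Q: "Q \<in> Pforms scale G0 G1" and h: "homlist G0 G1 cs ys" and l: "2 \<le> length ys"
  shows "(\<Sum>i\<in>Ix. boxh 2 (dform G0 G1 br (phi i)) (s (ictr (fst i) (snd i) Q)) cs ys)
    = - psgn (psum (drop 2 cs) \<and> psum (take 2 cs)) * s (ictr (psum (take 2 cs)) (br (ys ! 0) (ys ! 1)) Q) (drop 2 ys)"
proof -
  let ?Z = "br (ys ! 0) (ys ! 1)" and ?p = "psum (take 2 cs)"
  have lc: "length cs = length ys" using h by (simp add: homlist_def)
  have Z: "?Z \<in> hc ?p"
  proof -
    have l0: "0 < length ys" and l1: "1 < length ys" using l by auto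
    have "ys ! 0 \<in> hc (cs ! 0)" "ys ! 1 \<in> hc (cs ! 1)"
      by (rule homlist_nth[OF h l0], rule homlist_nth[OF h l1])
    then have "?Z \<in> hc (cs ! 0 \<noteq> cs ! 1)" by (rule brhom)
    moreover have "take 2 cs = [cs ! 0, cs ! 1]" using l lc by (intro take2) simp
    ultimately show ?thesis by simp
  qed
  have PI: "\<And>i. i \<in> Ix \<Longrightarrow> ictr (fst i) (snd i) Q \<in> Pforms scale G0 G1"
    using ictr_Pforms[OF Q] Ix_hc by blast
  have ht: "homlist G0 G1 (take 2 cs) (take 2 ys)" using homlist_take[OF h] .
  have dv: "dform G0 G1 br (phi i) (take 2 ys) = - coord i ?Z" for i
    using dform_hom[OF phi_gdual ht, of i] l by (simp add: phi_def)
  have "(\<Sum>i\<in>Ix. boxh 2 (dform G0 G1 br (phi i)) (s (ictr (fst i) (snd i) Q)) cs ys)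
      = - psgn (psum (drop 2 cs) \<and> ?p) * (\<Sum>i\<in>Ix. coord i ?Z * s (ictr (fst i) (snd i) Q) (drop 2 ys))"
    by (simp add: boxh_def dv sum_distrib_left algebra_simps sum_negf)
  also have "(\<Sum>i\<in>Ix. coord i ?Z * s (ictr (fst i) (snd i) Q) (drop 2 ys))
      = s (\<lambda>xs. \<Sum>i\<in>Ix. coord i ?Z * ictr (fst i) (snd i) Q xs) (drop 2 ys)"
    using s_sum[of Ix "\<lambda>i. ictr (fst i) (snd i) Q" "\<lambda>i. coord i ?Z"] PI by simp
  also have "(\<lambda>xs. \<Sum>i\<in>Ix. coord i ?Z * ictr (fst i) (snd i) Q xs) = ictr ?p ?Z Q"
    by (rule ictr_basis[OF Q Z])
  finally show ?thesis by simp
qed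

end

context LSS
begin

lemma srec:
  assumes Q: "Q \<in> Pforms scale G0 G1" and ord: "\<And>xs. length xs \<noteq> Suc k \<Longrightarrow> Q xs = 0"
    and h: "homlist G0 G1 bs xs"
  shows "s Q xs = (if 2 \<le> length xs then - (1 / of_nat (Suc k)) * (1 / of_nat (fact 2 * fact (length xs - 2))) *
   (\<Sum>\<sigma>\<in>{\<sigma>. \<sigma> permutes {..<length xs}}. of_int (sign \<sigma>) * eps \<sigma> bs *
      (psgn (psum (drop 2 (permute_list \<sigma> bs)) \<and> psum (take 2 (permute_list \<sigma> bs))) *
      s (ictr (psum (take 2 (permute_list \<sigma> bs))) (br (permute_list \<sigma> xs ! 0) (permute_list \<sigma> xs ! 1)) Q)
        (drop 2 (permute_list \<sigma> xs)))) else 0)"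
proof -
  let ?k = "Suc k"
  let ?S = "{\<sigma>. \<sigma> permutes {..<length xs}}"
  have PI: "\<And>i. i \<in> Ix \<Longrightarrow> ictr (fst i) (snd i) Q \<in> Pforms scale G0 G1"
    using ictr_Pforms[OF Q] Ix_hc by blast
  have PS: "\<And>i. i \<in> Ix \<Longrightarrow> sprod G0 G1 (phi i) (ictr (fst i) (snd i) Q) \<in> Pforms scale G0 G1"
    using sprod_Pforms[OF gdual_Pforms[OF phi_gdual] PI] by blast
  have E: "Q = (\<lambda>xs. \<Sum>i\<in>Ix. (1 / of_nat ?k) * sprod G0 G1 (phi i) (ictr (fst i) (snd i) Q) xs)"
    using euler[OF Q ord] by simp
  have "s Q = (\<lambda>xs. \<Sum>i\<in>Ix. (1 / of_nat ?k) * s (sprod G0 G1 (phi i) (ictr (fst i) (snd i) Q)) xs)"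
    by (subst E, rule s_sum[OF PS])
  also have "\<dots> = (\<lambda>xs. \<Sum>i\<in>Ix. (1 / of_nat ?k) * wprod G0 G1 (dform G0 G1 br (phi i)) (s (ictr (fst i) (snd i) Q)) xs)"
    using s_mult[OF gdual_Pforms[OF phi_gdual] PI] s_phi by (intro ext sum.cong refl) simp
  finally have sQ: "s Q xs = (\<Sum>i\<in>Ix. (1 / of_nat ?k) * wprod G0 G1 (dform G0 G1 br (phi i)) (s (ictr (fst i) (snd i) Q)) xs)"
    by simp
  have mpsi: "\<And>i. i \<in> Ix \<Longrightarrow> multilin scale (s (ictr (fst i) (snd i) Q))"
    using s_ml[OF PI] .
  show ?thesis
  proof (cases "2 \<le> length xs")
    case False
    then show ?thesis unfolding sQ using wprod_dphi_hom[OF mpsi h] by simp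
  next
    case True
    have "s Q xs = (\<Sum>i\<in>Ix. (1 / of_nat ?k) * (1 / of_nat (fact 2 * fact (length xs - 2)) *
      (\<Sum>\<sigma>\<in>?S. of_int (sign \<sigma>) * eps \<sigma> bs *
         boxh 2 (dform G0 G1 br (phi i)) (s (ictr (fst i) (snd i) Q)) (permute_list \<sigma> bs) (permute_list \<sigma> xs))))"
      unfolding sQ using wprod_dphi_hom[OF mpsi h] True by (intro sum.cong refl) simp
    also have "\<dots> = (1 / of_nat ?k) * (1 / of_nat (fact 2 * fact (length xs - 2))) *
      (\<Sum>\<sigma>\<in>?S. of_int (sign \<sigma>) * eps \<sigma> bs *
         (\<Sum>i\<in>Ix. boxh 2 (dform G0 G1 br (phi i)) (s (ictr (fst i) (snd i) Q)) (permute_list \<sigma> bs) (permute_list \<sigma> xs)))"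
      by (simp add: sum_distrib_left sum.swap[of _ Ix] mult.assoc)
    also have "\<dots> = (1 / of_nat ?k) * (1 / of_nat (fact 2 * fact (length xs - 2))) *
      (\<Sum>\<sigma>\<in>?S. - (of_int (sign \<sigma>) * eps \<sigma> bs *
      (psgn (psum (drop 2 (permute_list \<sigma> bs)) \<and> psum (take 2 (permute_list \<sigma> bs))) *
      s (ictr (psum (take 2 (permute_list \<sigma> bs))) (br (permute_list \<sigma> xs ! 0) (permute_list \<sigma> xs ! 1)) Q)
        (drop 2 (permute_list \<sigma> xs)))))"
    proof -
      have "(\<Sum>i\<in>Ix. boxh 2 (dform G0 G1 br (phi i)) (s (ictr (fst i) (snd i) Q)) (permute_list \<sigma> bs) (permute_list \<sigma> xs))
        = - psgn (psum (drop 2 (permute_list \<sigma> bs)) \<and> psum (take 2 (permute_list \<sigma> bs))) *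
          s (ictr (psum (take 2 (permute_list \<sigma> bs))) (br (permute_list \<sigma> xs ! 0) (permute_list \<sigma> xs ! 1)) Q)
          (drop 2 (permute_list \<sigma> xs))" if "\<sigma> \<in> ?S" for \<sigma>
        using boxsum[OF Q homlist_permute[OF h] , of \<sigma>] that True by simp
      then show ?thesis by (intro arg_cong[where f="\<lambda>x. (1 / of_nat ?k) * (1 / of_nat (fact 2 * fact (length xs - 2))) * x"] sum.cong refl) auto
    qed
    finally show ?thesis using True by (simp add: sum_negf)
  qed
qed

lemma perms_empty: "{\<sigma>. \<sigma> permutes {..<(0::nat)}} = {id}"
  by auto

lemma cT_Suc: "cT (Suc k) = - cT k / (2 * of_nat (Suc k))"
  unfolding cT_def by (simp add: field_simps)

lemma Tform:
  assumes "Q \<in> Pforms scale G0 G1" "\<And>xs. length xs \<noteq> k \<Longrightarrow> Q xs = 0" "homlist G0 G1 bs xs"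
  shows "s Q xs = (if length xs = 2 * k then cT k * Alt (2 * k) (\<lambda>cs ys. Q (pairb br ys)) bs xs else 0)"
  using assms
proof (induction k arbitrary: Q bs xs)
  case 0
  have "Q = constf (Q [])"
    using 0(2) by (auto simp: constf_def fun_eq_iff)
  then have sQ: "s Q = constf (Q [])" using s_const by metis
  show ?case
  proof (cases "xs = []")
    case True
    then have "bs = []" using 0(3) by (simp add: homlist_def)
    then show ?thesis using True sQ by (simp add: Alt_def perms_empty constf_def cT_def)
  next
    case False
    then show ?thesis using sQ by (simp add: constf_def)
  qed
next
  case (Suc k)
  note Q = Suc.prems(1) and ord = Suc.prems(2) and h = Suc.prems(3)
  let ?n = "length xs"
  let ?S = "{\<sigma>. \<sigma> permutes {..<?n}}"
  have lb: "length bs = ?n" using h by (simp add: homlist_def)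
  have mQ: "multilin scale Q" using Q by (simp add: Pforms_def)
  show ?case
  proof (cases "2 \<le> ?n")
    case False
    then show ?thesis using srec[OF Q ord h] by simp
  next
    case True
    define T where "T \<sigma> = (psgn (psum (drop 2 (permute_list \<sigma> bs)) \<and> psum (take 2 (permute_list \<sigma> bs))) *
      s (ictr (psum (take 2 (permute_list \<sigma> bs))) (br (permute_list \<sigma> xs ! 0) (permute_list \<sigma> xs ! 1)) Q)
        (drop 2 (permute_list \<sigma> xs)))" for \<sigma>
    have sQ: "s Q xs = - (1 / of_nat (Suc k)) * (1 / of_nat (fact 2 * fact (?n - 2))) *
       (\<Sum>\<sigma>\<in>?S. of_int (sign \<sigma>) * eps \<sigma> bs * T \<sigma>)"
      using srec[OF Q ord h] True by (simp add: T_def)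
    have IH: "s (ictr (psum (take 2 (permute_list \<sigma> bs))) (br (permute_list \<sigma> xs ! 0) (permute_list \<sigma> xs ! 1)) Q)
        (drop 2 (permute_list \<sigma> xs)) = (if length (drop 2 (permute_list \<sigma> xs)) = 2 * k then cT k * Alt (2 * k) (\<lambda>cs ys.
          ictr (psum (take 2 (permute_list \<sigma> bs))) (br (permute_list \<sigma> xs ! 0) (permute_list \<sigma> xs ! 1)) Q (pairb br ys))
          (drop 2 (permute_list \<sigma> bs)) (drop 2 (permute_list \<sigma> xs)) else 0)"
      if s: "\<sigma> \<in> ?S" for \<sigma>
    proof -
      have s': "\<sigma> permutes {..<?n}" using s by simp
      have hp: "homlist G0 G1 (permute_list \<sigma> bs) (permute_list \<sigma> xs)" by (rule homlist_permute[OF h s'])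
      have Z: "br (permute_list \<sigma> xs ! 0) (permute_list \<sigma> xs ! 1) \<in> hc (psum (take 2 (permute_list \<sigma> bs)))"
      proof -
        have l0: "0 < ?n" and l1: "1 < ?n" using True by auto
        have "permute_list \<sigma> xs ! 0 \<in> hc (permute_list \<sigma> bs ! 0)" "permute_list \<sigma> xs ! 1 \<in> hc (permute_list \<sigma> bs ! 1)"
          using homlist_nth[OF hp, of 0] homlist_nth[OF hp, of 1] l0 l1 by auto
        then have "br (permute_list \<sigma> xs ! 0) (permute_list \<sigma> xs ! 1) \<in> hc (permute_list \<sigma> bs ! 0 \<noteq> permute_list \<sigma> bs ! 1)"
          by (rule brhom)
        moreover have "take 2 (permute_list \<sigma> bs) = [permute_list \<sigma> bs ! 0, permute_list \<sigma> bs ! 1]"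
          using True lb by (intro take2) simp
        ultimately show ?thesis by simp
      qed
      show ?thesis
      proof (rule Suc.IH)
        show "ictr (psum (take 2 (permute_list \<sigma> bs))) (br (permute_list \<sigma> xs ! 0) (permute_list \<sigma> xs ! 1)) Q \<in> Pforms scale G0 G1"
          by (rule ictr_Pforms[OF Q Z])
        show "\<And>ys. length ys \<noteq> k \<Longrightarrow> ictr (psum (take 2 (permute_list \<sigma> bs))) (br (permute_list \<sigma> xs ! 0) (permute_list \<sigma> xs ! 1)) Q ys = 0"
          by (rule ictr_order[OF ord])
        show "homlist G0 G1 (drop 2 (permute_list \<sigma> bs)) (drop 2 (permute_list \<sigma> xs))"
          by (rule homlist_drop[OF hp])
      qed
    qed
    show ?thesis
    proof (cases "?n = 2 * Suc k")
      case False
      have ne: "?n - 2 \<noteq> 2 * k" using True False by arith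
      have "T \<sigma> = 0" if "\<sigma> \<in> ?S" for \<sigma>
        using IH[OF that] ne by (simp add: T_def)
      then show ?thesis using sQ False by simp
    next
      case n: True
      let ?H = "\<lambda>cs ys. Q (pairb br ys)"
      have T: "T \<sigma> = cT k * (\<Sum>\<tau>\<in>{\<tau>. \<tau> permutes {..<?n - 2}}. of_int (sign \<tau>) * eps \<tau> (drop 2 (permute_list \<sigma> bs)) *
          ?H (take 2 (permute_list \<sigma> bs) @ permute_list \<tau> (drop 2 (permute_list \<sigma> bs)))
            (take 2 (permute_list \<sigma> xs) @ permute_list \<tau> (drop 2 (permute_list \<sigma> xs))))"
        if s: "\<sigma> \<in> ?S" for \<sigma>
      proof -
        have s': "\<sigma> permutes {..<?n}" using s by simp
        have hp: "homlist G0 G1 (permute_list \<sigma> bs) (permute_list \<sigma> xs)" by (rule homlist_permute[OF h s'])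
        let ?ds = "drop 2 (permute_list \<sigma> bs)" and ?ws = "drop 2 (permute_list \<sigma> xs)"
        let ?p = "psum (take 2 (permute_list \<sigma> bs))" and ?t = "psum ?ds"
        let ?Z = "br (permute_list \<sigma> xs ! 0) (permute_list \<sigma> xs ! 1)"
        have hd: "homlist G0 G1 ?ds ?ws" by (rule homlist_drop[OF hp])
        have lws: "length ?ws = 2 * k" using n by simp
        have tk: "take 2 (permute_list \<sigma> xs) = [permute_list \<sigma> xs ! 0, permute_list \<sigma> xs ! 1]"
          using True by (intro take2) simp
        have inner: "ictr ?p ?Z Q (pairb br (permute_list \<tau> ?ws)) = psgn (?p \<and> ?t) *
            Q (pairb br (take 2 (permute_list \<sigma> xs) @ permute_list \<tau> ?ws))"
          if t: "\<tau> permutes {..<?n - 2}" for \<tau>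
        proof -
          have t': "\<tau> permutes {..<length ?ws}" using t by simp
          have hpt: "homlist G0 G1 (permute_list \<tau> ?ds) (permute_list \<tau> ?ws)" by (rule homlist_permute[OF hd t'])
          have hpp: "homlist G0 G1 (pairp (permute_list \<tau> ?ds)) (pairb br (permute_list \<tau> ?ws))"
            by (rule homlist_pair[OF hpt])
          have ev: "even (length (permute_list \<tau> ?ds))" using lws hd by (simp add: homlist_def)
          have ps: "psum (pairp (permute_list \<tau> ?ds)) = ?t"
            using pairp_psum[OF ev] psum_permute[of \<tau> ?ds] t' hd by (simp add: homlist_def)
          show ?thesis using ictr_hom[OF mQ hpp, of ?p ?Z] ps tk by simp
        qed
        have "T \<sigma> = psgn (?t \<and> ?p) * (cT k * Alt (2 * k) (\<lambda>cs ys. ictr ?p ?Z Q (pairb br ys)) ?ds ?ws)"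
          unfolding T_def using IH[OF s] n by simp
        also have "Alt (2 * k) (\<lambda>cs ys. ictr ?p ?Z Q (pairb br ys)) ?ds ?ws
          = (\<Sum>\<tau>\<in>{\<tau>. \<tau> permutes {..<?n - 2}}. of_int (sign \<tau>) * eps \<tau> ?ds *
              (psgn (?p \<and> ?t) * Q (pairb br (take 2 (permute_list \<sigma> xs) @ permute_list \<tau> ?ws))))"
          unfolding Alt_def using n inner by (intro sum.cong) auto
        finally show ?thesis
          by (simp add: sum_distrib_left algebra_simps conj_commute)
      qed
      have "s Q xs = - (1 / of_nat (Suc k)) * (1 / of_nat (fact 2 * fact (?n - 2))) *
          (cT k * (of_nat (fact (?n - 2)) * Alt ?n ?H bs xs))"
      proof -
        have "(\<Sum>\<sigma>\<in>?S. of_int (sign \<sigma>) * eps \<sigma> bs * T \<sigma>) = cT k * (\<Sum>\<sigma>\<in>?S. of_int (sign \<sigma>) * eps \<sigma> bs *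
            (\<Sum>\<tau>\<in>{\<tau>. \<tau> permutes {..<?n - 2}}. of_int (sign \<tau>) * eps \<tau> (drop 2 (permute_list \<sigma> bs)) *
            ?H (take 2 (permute_list \<sigma> bs) @ permute_list \<tau> (drop 2 (permute_list \<sigma> bs)))
              (take 2 (permute_list \<sigma> xs) @ permute_list \<tau> (drop 2 (permute_list \<sigma> xs)))))"
        proof -
          have "(\<Sum>\<sigma>\<in>?S. of_int (sign \<sigma>) * eps \<sigma> bs * T \<sigma>) = (\<Sum>\<sigma>\<in>?S. cT k * (of_int (sign \<sigma>) * eps \<sigma> bs *
            (\<Sum>\<tau>\<in>{\<tau>. \<tau> permutes {..<?n - 2}}. of_int (sign \<tau>) * eps \<tau> (drop 2 (permute_list \<sigma> bs)) *
            ?H (take 2 (permute_list \<sigma> bs) @ permute_list \<tau> (drop 2 (permute_list \<sigma> bs)))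
              (take 2 (permute_list \<sigma> xs) @ permute_list \<tau> (drop 2 (permute_list \<sigma> xs))))))"
            by (intro sum.cong refl) (simp only: T mult_ac)
          then show ?thesis by (simp only: sum_distrib_left[symmetric])
        qed
        also have "\<dots> = cT k * (of_nat (fact (?n - 2)) * Alt ?n ?H bs xs)"
          using Alt_double[OF lb refl True, of ?H] by simp
        finally show ?thesis using sQ by simp
      qed
      also have "\<dots> = - (1 / of_nat (Suc k)) * ((1 / of_nat (fact 2 * fact (?n - 2))) * of_nat (fact (?n - 2))) *
          (cT k * Alt ?n ?H bs xs)"
        by (simp only: mult_ac)
      also have "(1 / of_nat (fact 2 * fact (?n - 2))) * of_nat (fact (?n - 2)) = (1 / 2 :: complex)"
      proof -
        have F: "(of_nat (fact (?n - 2)) :: complex) \<noteq> 0" by simp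
        show ?thesis using F by (simp add: field_simps)
      qed
      also have "- (1 / of_nat (Suc k)) * (1 / 2) * (cT k * Alt ?n ?H bs xs) = cT (Suc k) * Alt ?n ?H bs xs"
        unfolding cT_Suc by (simp add: field_simps)
      finally show ?thesis using n by simp
    qed
  qed
qed

end

context LSA
begin

lemma Alt_cong_hom:
  assumes h: "homlist G0 G1 bs xs" and l: "length xs = n"
    and eq: "\<And>cs ys. homlist G0 G1 cs ys \<Longrightarrow> length ys = n \<Longrightarrow> H1 cs ys = H2 cs ys"
  shows "Alt n H1 bs xs = Alt n H2 bs xs"
  unfolding Alt_def
proof (rule sum.cong[OF refl])
  fix \<rho> assume "\<rho> \<in> {\<rho>. \<rho> permutes {..<n}}"
  then have r: "\<rho> permutes {..<length xs}" using l by simp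
  show "of_int (sign \<rho>) * eps \<rho> bs * H1 (permute_list \<rho> bs) (permute_list \<rho> xs) =
        of_int (sign \<rho>) * eps \<rho> bs * H2 (permute_list \<rho> bs) (permute_list \<rho> xs)"
    using eq[OF homlist_permute[OF h r]] l by simp
qed

lemma Alt_sum: "Alt n (\<lambda>cs ys. \<Sum>j\<in>J. H j cs ys) bs xs = (\<Sum>j\<in>J. Alt n (H j) bs xs)"
  unfolding Alt_def by (simp add: sum_distrib_left sum.swap[of _ J])

lemma Alt_add: "Alt n (\<lambda>cs ys. H1 cs ys + H2 cs ys) bs xs = Alt n H1 bs xs + Alt n H2 bs xs"
  unfolding Alt_def by (simp add: algebra_simps sum.distrib)

lemma Alt_neg: "Alt n (\<lambda>cs ys. - H cs ys) bs xs = - Alt n H bs xs"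
  unfolding Alt_def by (simp add: sum_negf)

lemma Alt_zero: "Alt n (\<lambda>cs ys. 0) bs xs = 0"
  unfolding Alt_def by simp

lemma inv_hom:
  assumes L: "lieD G0 G1 br p X P = (\<lambda>_. 0)" and mP: "multilin scale P"
    and X: "X \<in> hc p" and h: "homlist G0 G1 ds ws"
  shows "(\<Sum>j<length ws. psgn (p \<and> psum (take j ds)) * P (ws[j := br X (ws ! j)])) = 0"
proof -
  have "lieD G0 G1 br p X P ws = - psgn (p \<and> (p \<noteq> psum ds)) *
      (\<Sum>j<length ws. psgn (p \<and> psum (take j ds)) * P (ws[j := br X (ws ! j)]))"
    unfolding lieD_def
  proof (rule hext_hom[OF h])
    fix cs' :: "bool list" and ys' :: "'g list" and i
    assume a: "length cs' = length ys'" "length ys' = length ws" "i < length ys'" "ys' ! i = 0"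
    have "P (ys'[j := br X (ys' ! j)]) = 0" for j
    proof (cases "j = i")
      case True
      then show ?thesis using ml_zero[OF mP, of i "ys'[j := br X (ys' ! j)]"] a by simp
    next
      case False
      then show ?thesis using ml_zero[OF mP, of i "ys'[j := br X (ys' ! j)]"] a by simp
    qed
    then show "- psgn (p \<and> (p \<noteq> psum cs')) *
      (\<Sum>j<length ys'. psgn (p \<and> psum (take j cs')) * P (ys'[j := br X (ys' ! j)])) = 0" by simp
  qed
  then show ?thesis using L by (simp add: psgn_def split: if_splits)
qed

lemma br_neg2: "br y (- v) = - br y v"
  using br_add2[of y v "- v"] by (simp add: eq_neg_iff_add_eq_0 add.commute)

lemma br_neg1: "br (- v) y = - br v y"
  using br_add1[of v "- v" y] by (simp add: eq_neg_iff_add_eq_0 add.commute)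

lemma super_jacobi:
  assumes a: "x \<in> hc A" and b: "y \<in> hc B" and c: "z \<in> hc C"
  shows "scale (psgn ((A \<noteq> B) \<and> C)) (br z (br x y)) + scale (psgn ((C \<noteq> A) \<and> B) ) (scale (psgn (C \<and> (A \<noteq> B))) (br y (br z x)))
     + br x (br y z) = 0"
proof -
  have j: "br x (br y z) = br (br x y) z + scale (psgn (A \<and> B)) (br y (br x z))" by (rule brjac[OF a b])
  have xy: "br x y \<in> hc (A \<noteq> B)" by (rule brhom[OF a b])
  have a1: "br (br x y) z = - scale (psgn ((A \<noteq> B) \<and> C)) (br z (br x y))" by (rule branti[OF xy c])
  have a2: "br x z = - scale (psgn (A \<and> C)) (br z x)" by (rule branti[OF a c])
  have "br y (br x z) = - scale (psgn (A \<and> C)) (br y (br z x))"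
    unfolding a2 br_neg2 br_scale2 ..
  then have j2: "br x (br y z) = - scale (psgn ((A \<noteq> B) \<and> C)) (br z (br x y)) - scale (psgn (A \<and> B) * psgn (A \<and> C)) (br y (br z x))"
    using j a1 by (simp add: scale_minus_right)
  show ?thesis unfolding j2
    by (cases A; cases B; cases C) (simp_all add: scale_minus_left)
qed

lemma len4: "4 \<le> length xs \<Longrightarrow> \<exists>a b c d r. xs = a # b # c # d # r"
proof -
  assume "4 \<le> length xs"
  then show ?thesis
    by (cases xs; cases "tl xs"; cases "tl (tl xs)"; cases "tl (tl (tl xs))") (auto simp: numeral_eq_Suc)
qed

lemma ml_head_add: "multilin scale P \<Longrightarrow> P ((x + y) # R) = P (x # R) + P (y # R)"
  using ml_add[of P 0 "0 # R" x y] by simp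

lemma ml_head_scale: "multilin scale P \<Longrightarrow> P (scale a x # R) = a * P (x # R)"
  using ml_scale[of P 0 "0 # R" a x] by simp

lemma ml_head_zero: "multilin scale P \<Longrightarrow> P (0 # R) = 0"
  using ml_zero[of P 0 "0 # R"] by simp

definition Gj :: "('g list \<Rightarrow> complex) \<Rightarrow> bool list \<Rightarrow> 'g list \<Rightarrow> complex" where
  "Gj P cs ys = psgn ((cs ! 0 \<noteq> cs ! 1) \<and> cs ! 2) * P (br (ys ! 2) (br (ys ! 0) (ys ! 1)) # ys ! 3 # pairb br (drop 4 ys))"

lemma Gj_jacobi:
  assumes mP: "multilin scale P" and h: "homlist G0 G1 cs ys" and l: "4 \<le> length ys"
  shows "Gj P cs ys + of_int (sign (frontp 2)) * eps (frontp 2) cs * Gj P (permute_list (frontp 2) cs) (permute_list (frontp 2) ys)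
    + of_int (sign (frontp 2 \<circ> frontp 2)) * eps (frontp 2 \<circ> frontp 2) cs *
        Gj P (permute_list (frontp 2 \<circ> frontp 2) cs) (permute_list (frontp 2 \<circ> frontp 2) ys) = 0"
proof -
  have lc: "length cs = length ys" using h by (simp add: homlist_def)
  obtain y0 y1 y2 y3 r where ys: "ys = y0 # y1 # y2 # y3 # r"
    using len4[OF l] by blast
  obtain c0 c1 c2 c3 cr where cs: "cs = c0 # c1 # c2 # c3 # cr"
    using len4[of cs] l lc by auto
  have hy: "y0 \<in> hc c0" "y1 \<in> hc c1" "y2 \<in> hc c2" using h ys cs by auto
  have f2: "frontp 2 permutes {..<length ys}" using l by (intro frontp_permutes) simp
  have f2c: "frontp 2 permutes {..<length cs}" using f2 lc by simp
  have s1: "sign (frontp 2) = 1" using sign_frontp[of 2 "length ys"] l by simp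
  have s2: "sign (frontp 2 \<circ> frontp 2) = 1"
    using sign_compose[OF perm_of[OF f2] perm_of[OF f2]] s1 by simp
  have py1: "permute_list (frontp 2) ys = y2 # y0 # y1 # y3 # r"
    using permute_list_frontp[of 2 ys] ys by (simp add: numeral_2_eq_2)
  have pc1: "permute_list (frontp 2) cs = c2 # c0 # c1 # c3 # cr"
    using permute_list_frontp[of 2 cs] cs by (simp add: numeral_2_eq_2)
  have py2: "permute_list (frontp 2 \<circ> frontp 2) ys = y1 # y2 # y0 # y3 # r"
    using permute_list_compose[OF f2, of "frontp 2"] py1 permute_list_frontp[of 2 "y2 # y0 # y1 # y3 # r"]
    by (simp add: numeral_2_eq_2)
  have pc2: "permute_list (frontp 2 \<circ> frontp 2) cs = c1 # c2 # c0 # c3 # cr"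
    using permute_list_compose[OF f2c, of "frontp 2"] pc1 permute_list_frontp[of 2 "c2 # c0 # c1 # c3 # cr"]
    by (simp add: numeral_2_eq_2)
  have e1: "eps (frontp 2) cs = psgn (c2 \<and> (c0 \<noteq> c1))"
    using eps_frontp[of 2 cs] cs by (simp add: numeral_2_eq_2)
  have e2: "eps (frontp 2 \<circ> frontp 2) cs = psgn (c2 \<and> (c0 \<noteq> c1)) * psgn (c1 \<and> (c2 \<noteq> c0))"
  proof -
    have "eps (frontp 2 \<circ> frontp 2) cs = eps (frontp 2) cs * eps (frontp 2) (permute_list (frontp 2) cs)"
      using eps_cocycle[OF f2c f2c] .
    then show ?thesis using e1 pc1 eps_frontp[of 2 "c2 # c0 # c1 # c3 # cr"] by (simp add: numeral_2_eq_2)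
  qed
  let ?R = "y3 # pairb br r"
  have J: "scale (psgn ((c0 \<noteq> c1) \<and> c2)) (br y2 (br y0 y1)) + scale (psgn ((c2 \<noteq> c0) \<and> c1)) (scale (psgn (c2 \<and> (c0 \<noteq> c1))) (br y1 (br y2 y0)))
     + br y0 (br y1 y2) = 0" by (rule super_jacobi[OF hy])
  have "P ((scale (psgn ((c0 \<noteq> c1) \<and> c2)) (br y2 (br y0 y1)) + scale (psgn ((c2 \<noteq> c0) \<and> c1)) (scale (psgn (c2 \<and> (c0 \<noteq> c1))) (br y1 (br y2 y0)))
     + br y0 (br y1 y2)) # ?R) = 0" unfolding J by (rule ml_head_zero[OF mP])
  then have "psgn ((c0 \<noteq> c1) \<and> c2) * P (br y2 (br y0 y1) # ?R) +
      psgn ((c2 \<noteq> c0) \<and> c1) * (psgn (c2 \<and> (c0 \<noteq> c1)) * P (br y1 (br y2 y0) # ?R)) + P (br y0 (br y1 y2) # ?R) = 0"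
    by (simp add: ml_head_add[OF mP] ml_head_scale[OF mP] mult.assoc)
  moreover have k: "psgn (c1 \<and> c2 = (\<not> c0)) * (psgn (c2 \<and> c0 = (\<not> c1)) * (psgn (c1 = (\<not> c2) \<and> c0) * X)) = X" for X
    by (cases c0; cases c1; cases c2) simp_all
  ultimately show ?thesis
    unfolding Gj_def py1 py2 pc1 pc2 e1 e2 s1 s2 using ys cs
    by (simp add: numeral_eq_Suc algebra_simps k)
qed

lemma Alt_Gj_zero:
  assumes mP: "multilin scale P" and h: "homlist G0 G1 bs xs" and l: "length xs = n" and n4: "4 \<le> n"
  shows "Alt n (Gj P) bs xs = 0"
proof -
  have lb: "length bs = n" using h l by (simp add: homlist_def)
  have f2: "frontp 2 permutes {..<n}" using n4 by (intro frontp_permutes) simp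
  have f22: "frontp 2 \<circ> frontp 2 permutes {..<n}" by (rule permutes_compose[OF f2 f2])
  have a1: "Alt n (Gj P) bs xs = Alt n (\<lambda>cs ys. of_int (sign (frontp 2)) * eps (frontp 2) cs *
      Gj P (permute_list (frontp 2) cs) (permute_list (frontp 2) ys)) bs xs"
    by (rule Alt_reindex[OF f2 lb l])
  have a2: "Alt n (Gj P) bs xs = Alt n (\<lambda>cs ys. of_int (sign (frontp 2 \<circ> frontp 2)) * eps (frontp 2 \<circ> frontp 2) cs *
      Gj P (permute_list (frontp 2 \<circ> frontp 2) cs) (permute_list (frontp 2 \<circ> frontp 2) ys)) bs xs"
    by (rule Alt_reindex[OF f22 lb l])
  have "Alt n (\<lambda>cs ys. Gj P cs ys + of_int (sign (frontp 2)) * eps (frontp 2) cs * Gj P (permute_list (frontp 2) cs) (permute_list (frontp 2) ys)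
    + of_int (sign (frontp 2 \<circ> frontp 2)) * eps (frontp 2 \<circ> frontp 2) cs *
        Gj P (permute_list (frontp 2 \<circ> frontp 2) cs) (permute_list (frontp 2 \<circ> frontp 2) ys)) bs xs
      = Alt n (\<lambda>cs ys. 0) bs xs"
    using Gj_jacobi[OF mP] n4 by (intro Alt_cong_hom[OF h l]) auto
  then have "Alt n (Gj P) bs xs + Alt n (Gj P) bs xs + Alt n (Gj P) bs xs = 0"
    unfolding Alt_add Alt_zero using a1 a2 by simp
  then show ?thesis by simp
qed

lemma pairp_append: "even (length xs) \<Longrightarrow> pairp (xs @ ys) = pairp xs @ pairp ys"
  by (induction xs rule: pairp.induct) auto

definition Tj :: "('g list \<Rightarrow> complex) \<Rightarrow> nat \<Rightarrow> bool list \<Rightarrow> 'g list \<Rightarrow> complex" where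
  "Tj P j cs ys = psgn (cs ! 0 \<and> psum (take j (cs ! 1 # pairp (drop 2 cs)))) *
     P ((ys ! 1 # pairb br (drop 2 ys))[j := br (ys ! 0) ((ys ! 1 # pairb br (drop 2 ys)) ! j)])"

lemma Tj_G_shape:
  assumes mP: "multilin scale P" and sP: "supersym G0 G1 P"
    and h: "homlist G0 G1 (c0 # c1 # CA @ ca # cb # CB) (y0 # y1 # A @ a # b # B)"
    and lA: "length CA = length A" and lB: "length CB = length B"
    and eA: "even (length A)" and eB: "even (length B)"
  shows "Tj P (Suc (length A div 2)) (c0 # c1 # CA @ ca # cb # CB) (y0 # y1 # A @ a # b # B)
    = of_int (sign (frontp (length A + 3) \<circ> frontp (length A + 3))) * eps (frontp (length A + 3) \<circ> frontp (length A + 3)) (c0 # c1 # CA @ ca # cb # CB)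
      * Gj P (permute_list (frontp (length A + 3) \<circ> frontp (length A + 3)) (c0 # c1 # CA @ ca # cb # CB))
             (permute_list (frontp (length A + 3) \<circ> frontp (length A + 3)) (y0 # y1 # A @ a # b # B))"
proof -
  let ?cs = "c0 # c1 # CA @ ca # cb # CB" and ?ys = "y0 # y1 # A @ a # b # B"
  let ?m = "length A + 3" and ?j = "Suc (length A div 2)"
  have m3: "length A + 3 = Suc (Suc (Suc (length A)))" "4 + length A = Suc (Suc (Suc (Suc (length A))))"
    "Suc (length A + 3) = Suc (Suc (Suc (Suc (length A))))" by simp_all
  have lys: "length ?ys = length A + length B + 4" by simp
  have lcs: "length ?cs = length A + length B + 4" using lA lB by simp
  have fm: "frontp ?m permutes {..<length ?ys}" by (intro frontp_permutes) simp
  have fmc: "frontp ?m permutes {..<length ?cs}" using fm lys lcs by simp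
  have sgn: "sign (frontp ?m \<circ> frontp ?m) = 1"
  proof -
    have "sign (frontp ?m) = (-1) ^ ?m" by (rule sign_frontp[of _ "length ?ys"]) simp
    then show ?thesis using sign_compose[OF perm_of[OF fm] perm_of[OF fm]] by (simp add: power_mult_distrib[symmetric])
  qed
  have hy: "y0 \<in> hc c0" "y1 \<in> hc c1" "homlist G0 G1 CA A" "a \<in> hc ca" "b \<in> hc cb" "homlist G0 G1 CB B"
    using h lA by auto
  have py1: "permute_list (frontp ?m) ?ys = b # y0 # y1 # A @ a # B"
    using permute_list_frontp[of ?m ?ys] by (simp add: nth_append m3)
  have pc1: "permute_list (frontp ?m) ?cs = cb # c0 # c1 # CA @ ca # CB"
    using permute_list_frontp[of ?m ?cs] lA by (simp add: nth_append m3)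
  have py2: "permute_list (frontp ?m \<circ> frontp ?m) ?ys = a # b # y0 # y1 # A @ B"
    using permute_list_compose[OF fm, of "frontp ?m"] py1 permute_list_frontp[of ?m "b # y0 # y1 # A @ a # B"]
    by (simp add: nth_append m3)
  have pc2: "permute_list (frontp ?m \<circ> frontp ?m) ?cs = ca # cb # c0 # c1 # CA @ CB"
    using permute_list_compose[OF fmc, of "frontp ?m"] pc1 permute_list_frontp[of ?m "cb # c0 # c1 # CA @ ca # CB"] lA
    by (simp add: nth_append m3)
  have e2: "eps (frontp ?m \<circ> frontp ?m) ?cs = psgn (cb \<and> psum (c0 # c1 # CA @ [ca])) * psgn (ca \<and> psum (cb # c0 # c1 # CA))"
  proof -
    have "eps (frontp ?m \<circ> frontp ?m) ?cs = eps (frontp ?m) ?cs * eps (frontp ?m) (permute_list (frontp ?m) ?cs)"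
      by (rule eps_cocycle[OF fmc fmc])
    moreover have "eps (frontp ?m) ?cs = psgn (cb \<and> psum (c0 # c1 # CA @ [ca]))"
      using eps_frontp[of ?m ?cs] lA by (simp add: nth_append m3)
    moreover have "eps (frontp ?m) (cb # c0 # c1 # CA @ ca # CB) = psgn (ca \<and> psum (cb # c0 # c1 # CA))"
      using eps_frontp[of ?m "cb # c0 # c1 # CA @ ca # CB"] lA by (simp add: nth_append m3)
    ultimately show ?thesis using pc1 by simp
  qed
  let ?J = "br y0 (br a b)"
  let ?Jp = "c0 \<noteq> (ca \<noteq> cb)"
  have Jh: "?J \<in> hc ?Jp" using brhom[OF hy(1) brhom[OF hy(4) hy(5)]] .
  have G: "Gj P (ca # cb # c0 # c1 # CA @ CB) (a # b # y0 # y1 # A @ B)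
      = psgn ((ca \<noteq> cb) \<and> c0) * P (?J # y1 # pairb br A @ pairb br B)"
    unfolding Gj_def using pairb_append[OF eA, of br B] by (simp add: numeral_eq_Suc)
  let ?L = "y1 # pairb br A @ ?J # pairb br B"
  let ?dL = "c1 # pairp CA @ ?Jp # pairp CB"
  have lpA: "length (pairb br A) = length A div 2" by (rule length_pairb)
  have lpCA: "length (pairp CA) = length A div 2" using length_pairp[of CA] lA by simp
  have T: "Tj P ?j ?cs ?ys = psgn (c0 \<and> (c1 \<noteq> psum CA)) * P ?L"
  proof -
    have d2: "drop 2 ?ys = A @ a # b # B" and d2c: "drop 2 ?cs = CA @ ca # cb # CB" by (simp_all add: numeral_eq_Suc)
    have pb: "pairb br (A @ a # b # B) = pairb br A @ br a b # pairb br B"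
      using pairb_append[OF eA, of br "a # b # B"] by simp
    have pp: "pairp (CA @ ca # cb # CB) = pairp CA @ (ca \<noteq> cb) # pairp CB"
      using pairp_append[of CA "ca # cb # CB"] eA lA by simp
    have tk: "take ?j (c1 # pairp CA @ (ca \<noteq> cb) # pairp CB) = c1 # pairp CA" using lpCA by simp
    have psA: "psum (pairp CA) = psum CA" using pairp_psum[of CA] eA lA by simp
    have nth: "(y1 # pairb br A @ br a b # pairb br B) ! ?j = br a b" using lpA by (simp add: nth_append)
    have upd: "(y1 # pairb br A @ br a b # pairb br B)[?j := ?J] = ?L" using lpA by (simp add: list_update_append)
    show ?thesis unfolding Tj_def d2 d2c pb pp tk using nth upd psA lpCA by simp
  qed
  have hL: "homlist G0 G1 ?dL ?L"
    using hy Jh homlist_pair[OF hy(3)] homlist_pair[OF hy(6)] lpA lpCA by simp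
  have lL: "?j < length ?L" using lpA by simp
  have fj: "frontp ?j permutes {..<length ?L}" by (rule frontp_permutes[OF lL])
  have pL: "permute_list (frontp ?j) ?L = ?J # y1 # pairb br A @ pairb br B"
    using permute_list_frontp[OF lL] lpA by (simp add: nth_append)
  have eL: "eps (frontp ?j) ?dL = psgn (?Jp \<and> (c1 \<noteq> psum CA))"
  proof -
    have "eps (frontp ?j) ?dL = psgn (?dL ! ?j \<and> psum (take ?j ?dL))"
      by (rule eps_frontp) (use lpCA in simp)
    moreover have "?dL ! ?j = ?Jp" using lpCA by (simp add: nth_append)
    moreover have "take ?j ?dL = c1 # pairp CA" using lpCA by simp
    moreover have "psum (pairp CA) = psum CA" using pairp_psum[of CA] eA lA by simp
    ultimately show ?thesis using lpCA by simp
  qed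
  have sup: "eps (frontp ?j) ?dL * P (permute_list (frontp ?j) ?L) = P ?L"
    using sP hL fj unfolding supersym_def by blast
  have key: "psgn (c0 \<and> (c1 \<noteq> psum CA)) * (psgn (?Jp \<and> (c1 \<noteq> psum CA)) * X)
     = psgn (cb \<and> psum (c0 # c1 # CA @ [ca])) * psgn (ca \<and> psum (cb # c0 # c1 # CA)) * (psgn ((ca \<noteq> cb) \<and> c0) * X)" for X
    by (cases c0; cases c1; cases ca; cases cb; cases "psum CA") simp_all
  show ?thesis
    unfolding T py2 pc2 sgn e2 G
    using sup[unfolded pL eL] key[of "P (?J # y1 # pairb br A @ pairb br B)"]
    by (simp add: algebra_simps)
qed

lemma shape6:
  assumes "2 * j + 2 \<le> length xs" "1 \<le> j"
  shows "\<exists>x0 x1 A a b B. xs = x0 # x1 # A @ a # b # B \<and> length A = 2 * j - 2"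
proof -
  obtain x0 x1 r where xs: "xs = x0 # x1 # r"
    using assms(1) by (cases xs; cases "tl xs") auto
  have lr: "2 * j - 2 + 2 \<le> length r" using assms xs by simp
  have "length (drop (2 * j - 2) r) \<ge> 2" using lr by simp
  then obtain a b B where d: "drop (2 * j - 2) r = a # b # B"
    by (cases "drop (2 * j - 2) r"; cases "tl (drop (2 * j - 2) r)") auto
  have "r = take (2 * j - 2) r @ a # b # B" using d by (metis append_take_drop_id)
  moreover have "length (take (2 * j - 2) r) = 2 * j - 2" using lr by simp
  ultimately show ?thesis using xs by blast
qed

lemma Tj_G:
  assumes P: "P \<in> Pforms scale G0 G1" and h: "homlist G0 G1 cs ys" and l: "length ys = 2 * k"
    and j: "1 \<le> j" "j < k"
  shows "Tj P j cs ys = of_int (sign (frontp (2 * j + 1) \<circ> frontp (2 * j + 1))) * eps (frontp (2 * j + 1) \<circ> frontp (2 * j + 1)) cs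
      * Gj P (permute_list (frontp (2 * j + 1) \<circ> frontp (2 * j + 1)) cs) (permute_list (frontp (2 * j + 1) \<circ> frontp (2 * j + 1)) ys)"
proof -
  have mP: "multilin scale P" and sP: "supersym G0 G1 P" using P by (auto simp: Pforms_def)
  have lc: "length cs = 2 * k" using h l by (simp add: homlist_def)
  obtain y0 y1 A a b B where ys: "ys = y0 # y1 # A @ a # b # B" and lA: "length A = 2 * j - 2"
    using shape6[of j ys] l j by auto
  obtain c0 c1 CA ca cb CB where cs: "cs = c0 # c1 # CA @ ca # cb # CB" and lCA: "length CA = 2 * j - 2"
    using shape6[of j cs] lc j by auto
  have lB: "length CB = length B" using l lc ys cs lA lCA by simp
  have eB: "even (length B)" using l ys lA j by simp presburger
  have m: "length A + 3 = 2 * j + 1" and jj: "Suc (length A div 2) = j" using lA j by auto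
  have "Tj P (Suc (length A div 2)) (c0 # c1 # CA @ ca # cb # CB) (y0 # y1 # A @ a # b # B)
    = of_int (sign (frontp (length A + 3) \<circ> frontp (length A + 3))) * eps (frontp (length A + 3) \<circ> frontp (length A + 3)) (c0 # c1 # CA @ ca # cb # CB)
      * Gj P (permute_list (frontp (length A + 3) \<circ> frontp (length A + 3)) (c0 # c1 # CA @ ca # cb # CB))
             (permute_list (frontp (length A + 3) \<circ> frontp (length A + 3)) (y0 # y1 # A @ a # b # B))"
    by (rule Tj_G_shape[OF mP sP]) (use h ys cs lA lCA lB eB in auto)
  then show ?thesis unfolding m jj ys cs .
qed

lemma inv_split:
  assumes P: "P \<in> Pforms scale G0 G1"
    and L: "\<And>p X. X \<in> hc p \<Longrightarrow> lieD G0 G1 br p X P = (\<lambda>_. 0)"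
    and h: "homlist G0 G1 cs ys" and l: "length ys = 2 * k" and k: "1 \<le> k"
  shows "P (pairb br ys) = - (\<Sum>j\<in>{1..<k}. Tj P j cs ys)"
proof -
  have mP: "multilin scale P" using P by (simp add: Pforms_def)
  have lc: "length cs = 2 * k" using h l by (simp add: homlist_def)
  obtain y0 y1 r where ys: "ys = y0 # y1 # r" using l k by (cases ys; cases "tl ys") auto
  obtain c0 c1 cr where cs: "cs = c0 # c1 # cr" using lc k by (cases cs; cases "tl cs") auto
  have hy: "y0 \<in> hc c0" "y1 \<in> hc c1" "homlist G0 G1 cr r" using h ys cs by auto
  let ?ws = "y1 # pairb br r" and ?ds = "c1 # pairp cr"
  have hw: "homlist G0 G1 ?ds ?ws" using hy(2) homlist_pair[OF hy(3)] by simp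
  have lw: "length ?ws = k" using l ys by (simp add: length_pairb)
  have "(\<Sum>j<length ?ws. psgn (c0 \<and> psum (take j ?ds)) * P (?ws[j := br y0 (?ws ! j)])) = 0"
    by (rule inv_hom[OF L[OF hy(1)] mP hy(1) hw])
  then have z: "(\<Sum>j<k. Tj P j cs ys) = 0" unfolding lw by (simp add: Tj_def ys cs numeral_eq_Suc)
  have "{..<k} = insert 0 {1..<k}" using k by auto
  then have "(\<Sum>j<k. Tj P j cs ys) = Tj P 0 cs ys + (\<Sum>j\<in>{1..<k}. Tj P j cs ys)" by simp
  moreover have "Tj P 0 cs ys = P (pairb br ys)" by (simp add: Tj_def ys cs numeral_eq_Suc)
  ultimately show ?thesis using z by (simp add: eq_neg_iff_add_eq_0)
qed

lemma Alt_P_zero: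
  assumes P: "P \<in> Pforms scale G0 G1"
    and L: "\<And>p X. X \<in> hc p \<Longrightarrow> lieD G0 G1 br p X P = (\<lambda>_. 0)"
    and h: "homlist G0 G1 bs xs" and l: "length xs = 2 * k" and k: "1 \<le> k"
  shows "Alt (2 * k) (\<lambda>cs ys. P (pairb br ys)) bs xs = 0"
proof -
  have mP: "multilin scale P" using P by (simp add: Pforms_def)
  have lb: "length bs = 2 * k" using h l by (simp add: homlist_def)
  have "Alt (2 * k) (\<lambda>cs ys. P (pairb br ys)) bs xs = Alt (2 * k) (\<lambda>cs ys. - (\<Sum>j\<in>{1..<k}. Tj P j cs ys)) bs xs"
    by (rule Alt_cong_hom[OF h l]) (rule inv_split[OF P L _ _ k])
  also have "\<dots> = - (\<Sum>j\<in>{1..<k}. Alt (2 * k) (Tj P j) bs xs)"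
    by (simp add: Alt_neg Alt_sum)
  also have "(\<Sum>j\<in>{1..<k}. Alt (2 * k) (Tj P j) bs xs) = 0"
  proof (rule sum.neutral, rule ballI)
    fix j assume "j \<in> {1..<k}"
    then have j: "1 \<le> j" "j < k" by auto
    let ?\<beta> = "frontp (2 * j + 1) \<circ> frontp (2 * j + 1)"
    have fb: "frontp (2 * j + 1) permutes {..<2 * k}" using j by (intro frontp_permutes) simp
    have b: "?\<beta> permutes {..<2 * k}" by (rule permutes_compose[OF fb fb])
    have "Alt (2 * k) (Tj P j) bs xs = Alt (2 * k) (\<lambda>cs ys. of_int (sign ?\<beta>) * eps ?\<beta> cs * Gj P (permute_list ?\<beta> cs) (permute_list ?\<beta> ys)) bs xs"
      by (rule Alt_cong_hom[OF h l]) (rule Tj_G[OF P _ _ j])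
    also have "\<dots> = Alt (2 * k) (Gj P) bs xs"
      by (rule Alt_reindex[OF b lb l, symmetric])
    also have "\<dots> = 0" by (rule Alt_Gj_zero[OF mP h l]) (use j in simp)
    finally show "Alt (2 * k) (Tj P j) bs xs = 0" .
  qed
  finally show ?thesis by simp
qed

end

context LSS
begin

theorem main:
  assumes P: "P \<in> Isplus scale G0 G1 br"
  shows "s P = (\<lambda>_. 0)"
proof -
  have PP: "P \<in> Pforms scale G0 G1" and L: "\<And>p X. X \<in> hc p \<Longrightarrow> lieD G0 G1 br p X P = (\<lambda>_. 0)"
    and P0: "P [] = 0"
    using P by (auto simp: Isplus_def Is_def)
  obtain N where N: "P = (\<lambda>xs. \<Sum>k\<in>{..N}. 1 * compo k P xs)" by (rule compo_decomp[OF PP])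
  have CP: "\<And>k. k \<in> {..N} \<Longrightarrow> compo k P \<in> Pforms scale G0 G1" using compo_Pforms[OF PP] by blast
  have sP: "s P = (\<lambda>xs. \<Sum>k\<in>{..N}. 1 * s (compo k P) xs)"
    by (subst N, rule s_sum[OF CP])
  show ?thesis
  proof (rule ml_eq_on_hom)
    show "multilin scale (s P)" by (rule s_ml[OF PP])
    show "multilin scale (\<lambda>_::'g list. 0::complex)" by (simp add: multilin_def)
    fix bs xs assume h: "homlist G0 G1 bs xs"
    have "s (compo k P) xs = 0" for k
    proof -
      have ord: "\<And>xs. length xs \<noteq> k \<Longrightarrow> compo k P xs = 0" by (simp add: compo_def)
      have T: "s (compo k P) xs = (if length xs = 2 * k then cT k * Alt (2 * k) (\<lambda>cs ys. compo k P (pairb br ys)) bs xs else 0)"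
        by (rule Tform[OF compo_Pforms[OF PP] ord h])
      show ?thesis
      proof (cases "length xs = 2 * k")
        case False then show ?thesis using T by simp
      next
        case True
        have "Alt (2 * k) (\<lambda>cs ys. compo k P (pairb br ys)) bs xs = Alt (2 * k) (\<lambda>cs ys. P (pairb br ys)) bs xs"
          by (rule Alt_cong_hom[OF h True]) (simp add: compo_def length_pairb)
        also have "\<dots> = 0"
        proof (cases "k = 0")
          case True
          then have "xs = []" "bs = []" using \<open>length xs = 2 * k\<close> h by (auto simp: homlist_def)
          then show ?thesis using True P0 by (simp add: Alt_def perms_empty)
        next
          case False
          then show ?thesis by (intro Alt_P_zero[OF PP L h \<open>length xs = 2 * k\<close>]) simp_all
        qed
        finally show ?thesis using T by simp
      qed
    qed
    then show "s P xs = 0" using sP by simp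
  qed
qed

end

theorem lemma3p4:
  fixes scale :: "complex \<Rightarrow> 'g::ab_group_add \<Rightarrow> 'g"
    and G0 G1 :: "'g set"
    and br :: "'g \<Rightarrow> 'g \<Rightarrow> 'g"
    and s :: "('g list \<Rightarrow> complex) \<Rightarrow> ('g list \<Rightarrow> complex)"
    and P :: "'g list \<Rightarrow> complex"
  assumes "lie_superalgebra scale G0 G1 br"
    and "is_s_map scale G0 G1 br s"
    and "P \<in> Isplus scale G0 G1 br"
  shows "s P = (\<lambda>_. 0)"
proof -
  interpret LSS scale G0 G1 br s
    by unfold_locales (rule assms(1), rule assms(2))
  show ?thesis by (rule main[OF assms(3)])
qed

end
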